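(* (1) Two elements of the taiga monoid ${\mathsf{taig}}$ lie in the same connected component of $K({\mathsf{taig}})$ if and only if they have the same evaluation. (2) For every $n\ge1$, every connected component of $K({\mathsf{taig}}_n)$ has diameter at most $n$, and some connected component has diameter at least $n-1$; hence the maximum diameter of a connected component of $K({\mathsf{taig}}_n)$ is $n-1$ or $n$.
   Context: Let $\mathcal{A}=\{1<2<3<\cdots\}$ be the ordered alphabet of positive integers and $\mathcal{A}_n=\{1<2<\cdots<n\}$. For a monoid $M$ and $s,t\in M$, write $s\sim t$ if there exist $x,y\in M$ with $s=xy$ and $t=yx$ (a cyclic shift); $\sim^*$ is the reflexive–transitive closure of $\sim$. The cyclic shift graph $K(M)$ is the undirected graph with vertex set $M$ and an edge between $s$ and $t$ iff $s\sim t$; its connected components are the $\sim^*$-classes, and distances/diameters are graph distances in $K(M)$. The evaluation of a word $w$ is the tuple $(|w|_a)_{a}$ giving the number of occurrences of each letter $a$; all monoids considered are defined by presentations whose defining relations preserve evaluation, so the evaluation of an element is well defined, and $s\equiv_{\mathrm{ev}} t$ means $s$ and $t$ have the same evaluation. The taiga monoid ${\mathsf{taig}}$ is $\mathcal{A}^*$ modulo the congruence generated by the relations $cavb=acvb$ (letters $a\le b<c$, $v\in\mathcal{A}^*$) together with $bavb=abvb$ (letters $a,b$, $v\in\mathcal{A}^*$); ${\mathsf{taig}}_n$ is defined by the same relations restricted to $\mathcal{A}_n$. Equivalently, two words are equal in ${\mathsf{taig}}$ iff right-to-left insertion of their letters into a binary search tree with multiplicities (each label occurs at most once, left subtree labels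 smaller, right subtree labels larger, and inserting an existing label increments its multiplicity) gives the same tree. *)

theory Defs
  imports Main "HOL-Library.Multiset" "HOL-Library.Extended_Nat"
begin

inductive taig_step :: "nat list \<Rightarrow> nat list \<Rightarrow> bool" where
  rel1: "a \<le> b \<Longrightarrow> b < c \<Longrightarrow>
     taig_step (p @ [c, a] @ v @ [b] @ q) (p @ [a, c] @ v @ [b] @ q)"
| rel2: "taig_step (p @ [b, a] @ v @ [b] @ q) (p @ [a, b] @ v @ [b] @ q)"

definition taig_eq :: "nat set \<Rightarrow> nat list \<Rightarrow> nat list \<Rightarrow> bool" where
  "taig_eq A = (\<lambda>x y. x \<in> lists A \<and> y \<in> lists A \<and> (taig_step x y \<or> taig_step y x))\<^sup>*\<^sup>*"

text \<open>Element of the monoid represented by a word (its congruence class).\<close>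
definition cls :: "nat set \<Rightarrow> nat list \<Rightarrow> nat list set" where
  "cls A u = {v \<in> lists A. taig_eq A u v}"

definition Alph :: "nat set" where "Alph = {a. 1 \<le> a}"
definition Alph_n :: "nat \<Rightarrow> nat set" where "Alph_n n = {1..n}"

definition K_vert :: "nat set \<Rightarrow> nat list set set" where
  "K_vert A = {cls A u | u. u \<in> lists A}"

text \<open>Edges of K(M): s ~ t iff s = xy and t = yx for some x, y in M
 (product of classes is the class of the concatenation).\<close>
definition K_edge :: "nat set \<Rightarrow> nat list set \<Rightarrow> nat list set \<Rightarrow> bool" where
  "K_edge A s t = (\<exists>x\<in>lists A. \<exists>y\<in>lists A. s = cls A (x @ y) \<and> t = cls A (y @ x))"

definition K_conn :: "nat set \<Rightarrow> nat list set \<Rightarrow> nat list set \<Rightarrow> bool" where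
  "K_conn A = (K_edge A)\<^sup>*\<^sup>*"

definition K_dist :: "nat set \<Rightarrow> nat list set \<Rightarrow> nat list set \<Rightarrow> enat" where
  "K_dist A s t = (if \<exists>k. (K_edge A ^^ k) s t
     then enat (LEAST k. (K_edge A ^^ k) s t) else \<infinity>)"

definition comp_diam :: "nat set \<Rightarrow> nat list set \<Rightarrow> enat" where
  "comp_diam A s = (SUP p \<in> {(t, u). K_conn A s t \<and> K_conn A s u}. K_dist A (fst p) (snd p))"

end

theory Submission
  imports Defs
begin

definition teq :: "nat list \<Rightarrow> nat list \<Rightarrow> bool" where "teq = taig_eq UNIV"

lemma teq_alt: "teq = (\<lambda>x y. taig_step x y \<or> taig_step y x)\<^sup>*\<^sup>*"
  unfolding teq_def taig_eq_def by simp

lemma teq_refl[simp]: "teq x x" by (simp add: teq_alt)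

lemma teq_sym: "teq x y \<Longrightarrow> teq y x"
proof -
  assume "teq x y"
  then have "(\<lambda>x y. taig_step x y \<or> taig_step y x)\<^sup>*\<^sup>* x y" by (simp add: teq_alt)
  then show ?thesis unfolding teq_alt
    by (induction rule: rtranclp_induct) (auto intro: converse_rtranclp_into_rtranclp)
qed

lemma teq_trans[trans]: "teq x y \<Longrightarrow> teq y z \<Longrightarrow> teq x z"
  unfolding teq_alt by (rule rtranclp_trans)

lemma teq_step: "taig_step x y \<Longrightarrow> teq x y"
  unfolding teq_alt by auto

lemma step_mset: "taig_step x y \<Longrightarrow> mset x = mset y"
  by (induction rule: taig_step.induct) (auto simp: union_ac)

lemma teq_mset: "teq x y \<Longrightarrow> mset x = mset y"
proof -
  assume "teq x y"
  then have "(\<lambda>x y. taig_step x y \<or> taig_step y x)\<^sup>*\<^sup>* x y" by (simp add: teq_alt)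
  then show ?thesis by (induction rule: rtranclp_induct) (auto dest: step_mset)
qed

lemma teq_set: "teq x y \<Longrightarrow> set x = set y"
  by (metis teq_mset set_mset_mset)

lemma step_ctxt: "taig_step x y \<Longrightarrow> taig_step (p @ x @ q) (p @ y @ q)"
proof (induction rule: taig_step.induct)
  case (rel1 a b c p' v q')
  have "taig_step ((p @ p') @ [c, a] @ v @ [b] @ (q' @ q)) ((p @ p') @ [a, c] @ v @ [b] @ (q' @ q))"
    using rel1 by (rule taig_step.rel1)
  then show ?case by simp
next
  case (rel2 p' b a v q')
  have "taig_step ((p @ p') @ [b, a] @ v @ [b] @ (q' @ q)) ((p @ p') @ [a, b] @ v @ [b] @ (q' @ q))"
    by (rule taig_step.rel2)
  then show ?case by simp
qed

lemma teq_ctxt: "teq x y \<Longrightarrow> teq (p @ x @ q) (p @ y @ q)"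
proof -
  assume "teq x y"
  then have "(\<lambda>x y. taig_step x y \<or> taig_step y x)\<^sup>*\<^sup>* x y" by (simp add: teq_alt)
  then show ?thesis
  proof (induction rule: rtranclp_induct)
    case base then show ?case by simp
  next
    case (step y z)
    then show ?case using teq_trans teq_step teq_sym step_ctxt by blast
  qed
qed

lemma teq_app: "teq x x' \<Longrightarrow> teq y y' \<Longrightarrow> teq (x @ y) (x' @ y')"
  using teq_ctxt[of x x' "[]" y] teq_ctxt[of y y' x' "[]"] teq_trans by simp

definition wit :: "nat \<Rightarrow> nat \<Rightarrow> nat list \<Rightarrow> bool" where
  "wit x y q = (x = y \<or> (\<exists>b\<in>set q. min x y \<le> b \<and> b \<le> max x y))"

lemma swap0: "x > y \<Longrightarrow> y \<le> b \<Longrightarrow> b \<le> x \<Longrightarrow> b \<in> set q \<Longrightarrow> teq (p @ [x, y] @ q) (p @ [y, x] @ q)"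
proof -
  assume a: "x > y" "y \<le> b" "b \<le> x" "b \<in> set q"
  then obtain v r where q: "q = v @ [b] @ r" by (metis append_Cons append_Nil in_set_conv_decomp)
  show ?thesis
  proof (cases "b < x")
    case True
    have "taig_step (p @ [x, y] @ v @ [b] @ r) (p @ [y, x] @ v @ [b] @ r)"
      using a True by (intro taig_step.rel1) auto
    then show ?thesis using q teq_step by simp
  next
    case False
    then have "b = x" using a by simp
    have "taig_step (p @ [x, y] @ v @ [x] @ r) (p @ [y, x] @ v @ [x] @ r)"
      by (rule taig_step.rel2)
    then show ?thesis using q teq_step \<open>b = x\<close> by simp
  qed
qed

lemma swap: "wit x y q \<Longrightarrow> teq (p @ [x, y] @ q) (p @ [y, x] @ q)"
proof -
  assume w: "wit x y q"
  have ex: "x \<noteq> y \<Longrightarrow> \<exists>b. b \<in> set q \<and> min x y \<le> b \<and> b \<le> max x y" using w by (auto simp: wit_def)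
  consider "x > y" | "x = y" | "x < y" by linarith
  then show ?thesis
  proof cases
    case 1
    then obtain b where b: "b \<in> set q" "min x y \<le> b" "b \<le> max x y" using ex by auto
    have "min x y = y" "max x y = x" using 1 by auto
    then show ?thesis using swap0[OF 1, of b q p] b by simp
  next
    case 2 then show ?thesis by simp
  next
    case 3
    then obtain b where b: "b \<in> set q" "min x y \<le> b" "b \<le> max x y" using ex by auto
    have "min x y = x" "max x y = y" using 3 by auto
    then have "teq (p @ [y, x] @ q) (p @ [x, y] @ q)" using swap0[OF 3, of b q p] b by simp
    then show ?thesis by (rule teq_sym)
  qed
qed

lemma wit_mono: "wit x y q \<Longrightarrow> set q \<subseteq> set q' \<Longrightarrow> wit x y q'"
  by (auto simp: wit_def)

lemma wit_commute: "wit x y q = wit y x q"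
  by (auto simp: wit_def min_def max_def)

lemma move_right: "(\<forall>z\<in>set zs. wit e z q) \<Longrightarrow> teq (p @ [e] @ zs @ q) (p @ zs @ [e] @ q)"
proof (induction zs arbitrary: p)
  case Nil then show ?case by simp
next
  case (Cons z zs)
  have w: "wit e z (zs @ q)" using Cons.prems wit_mono[of e z q "zs @ q"] by simp
  have 1: "teq (p @ [e, z] @ (zs @ q)) (p @ [z, e] @ (zs @ q))" using w by (rule swap)
  have 2: "teq ((p @ [z]) @ [e] @ zs @ q) ((p @ [z]) @ zs @ [e] @ q)"
    using Cons.prems by (intro Cons.IH) simp
  have 3: "p @ [z, e] @ (zs @ q) = (p @ [z]) @ [e] @ zs @ q" by simp
  have 4: "p @ [e] @ (z # zs) @ q = p @ [e, z] @ (zs @ q)" by simp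
  have 5: "p @ (z # zs) @ [e] @ q = (p @ [z]) @ zs @ [e] @ q" by simp
  have "teq (p @ [e, z] @ (zs @ q)) ((p @ [z]) @ zs @ [e] @ q)"
    using teq_trans[OF 1[unfolded 3] 2] .
  then show ?case unfolding 4 5 .
qed

lemma move_left: "(\<forall>z\<in>set zs. wit e z q) \<Longrightarrow> teq (p @ zs @ [e] @ q) (p @ [e] @ zs @ q)"
  using move_right teq_sym by blast

lemma partition_seg:
  "(\<forall>x\<in>set A. \<forall>y\<in>set A. Q x \<longrightarrow> \<not> Q y \<longrightarrow> wit y x q) \<Longrightarrow>
   teq (p @ A @ q) (p @ filter Q A @ filter (\<lambda>x. \<not> Q x) A @ q)"
proof (induction A arbitrary: p)
  case Nil then show ?case by simp
next
  case (Cons a A)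
  have IH: "teq ((p @ [a]) @ A @ q) ((p @ [a]) @ filter Q A @ filter (\<lambda>x. \<not> Q x) A @ q)"
    using Cons.prems by (intro Cons.IH) simp
  have e1: "p @ (a # A) @ q = (p @ [a]) @ A @ q" by simp
  show ?case
  proof (cases "Q a")
    case True
    have "(p @ [a]) @ filter Q A @ filter (\<lambda>x. \<not> Q x) A @ q =
          p @ filter Q (a # A) @ filter (\<lambda>x. \<not> Q x) (a # A) @ q" using True by simp
    then show ?thesis using IH True unfolding e1 by simp
  next
    case False
    have "\<forall>z\<in>set (filter Q A). wit a z (filter (\<lambda>x. \<not> Q x) A @ q)"
    proof
      fix z assume "z \<in> set (filter Q A)"
      then have "wit a z q" using Cons.prems False by auto
      then show "wit a z (filter (\<lambda>x. \<not> Q x) A @ q)" by (rule wit_mono) simp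
    qed
    then have m: "teq (p @ [a] @ filter Q A @ (filter (\<lambda>x. \<not> Q x) A @ q))
                   (p @ filter Q A @ [a] @ (filter (\<lambda>x. \<not> Q x) A @ q))"
      by (rule move_right)
    have e2: "p @ [a] @ filter Q A @ (filter (\<lambda>x. \<not> Q x) A @ q) =
              (p @ [a]) @ filter Q A @ filter (\<lambda>x. \<not> Q x) A @ q" by simp
    have e3: "p @ filter Q A @ [a] @ (filter (\<lambda>x. \<not> Q x) A @ q) =
              p @ filter Q (a # A) @ filter (\<lambda>x. \<not> Q x) (a # A) @ q" using False by simp
    show ?thesis using teq_trans[OF IH m[unfolded e2 e3]] unfolding e1 .
  qed
qed

lemma filter_split: "filter P w = xs @ ys \<Longrightarrow> \<exists>w1 w2. w = w1 @ w2 \<and> filter P w1 = xs \<and> filter P w2 = ys"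
proof (induction xs arbitrary: w)
  case Nil then show ?case by (intro exI[of _ "[]"] exI[of _ w]) auto
next
  case (Cons x xs)
  then obtain us vs where u: "w = us @ x # vs" "\<forall>u\<in>set us. \<not> P u" "P x" "xs @ ys = filter P vs"
    using filter_eq_ConsD[of P w x "xs @ ys"] by auto
  obtain w1 w2 where "vs = w1 @ w2" "filter P w1 = xs" "filter P w2 = ys" using Cons.IH u(4) by metis
  then show ?case using u by (intro exI[of _ "us @ x # w1"] exI[of _ w2]) auto
qed

lemma step_swap: "taig_step u v \<Longrightarrow> \<exists>p x y q. u = p @ [x, y] @ q \<and> v = p @ [y, x] @ q \<and> wit x y q"
proof (induction rule: taig_step.induct)
  case (rel1 a b c p v q)
  then show ?case by (intro exI[of _ p] exI[of _ c] exI[of _ a] exI[of _ "v @ [b] @ q"]) (auto simp: wit_def)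
next
  case (rel2 p b a v q)
  then show ?case by (intro exI[of _ p] exI[of _ b] exI[of _ a] exI[of _ "v @ [b] @ q"]) (auto simp: wit_def)
qed

definition mid :: "nat \<Rightarrow> nat \<Rightarrow> nat \<Rightarrow> bool" where "mid lo hi x = (lo < x \<and> x < hi)"

definition inr :: "nat \<Rightarrow> nat \<Rightarrow> nat list \<Rightarrow> bool" where
  "inr lo hi w = (\<forall>x\<in>set w. lo \<le> x \<and> x \<le> hi)"

lemma elimE:
  assumes "inr lo hi E" "filter (mid lo hi) E = []" "x \<noteq> y" "mid lo hi x" "mid lo hi y"
    "b \<in> set Q" "min x y \<le> b" "b \<le> max x y" "mid lo hi b"
  shows "\<exists>P2 Q2. teq (P1 @ [x] @ E @ [y] @ Q) (P2 @ [x, y] @ Q2) \<and>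
            filter (mid lo hi) P2 = filter (mid lo hi) P1 \<and> filter (mid lo hi) Q2 = filter (mid lo hi) Q \<and> b \<in> set Q2"
  using assms(1,2,6)
proof (induction E arbitrary: P1 Q)
  case Nil then show ?case by (intro exI[of _ P1] exI[of _ Q]) auto
next
  case (Cons e E)
  have Ep: "inr lo hi E" "filter (mid lo hi) E = []" "\<not> mid lo hi e" using Cons.prems by (auto simp: inr_def split: if_splits)
  have e: "e = lo \<or> e = hi" using Cons.prems(1) Ep(3) unfolding inr_def mid_def by auto
  have lohi: "lo < x" "x < hi" "lo < y" "y < hi" "lo < b" "b < hi" using assms(4,5,9) by (auto simp: mid_def)
  show ?case
  proof (cases "wit e x (E @ [y] @ Q)")
    case True
    have 1: "teq (P1 @ [x, e] @ (E @ [y] @ Q)) (P1 @ [e, x] @ (E @ [y] @ Q))"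
      using True by (intro swap) (simp add: wit_commute)
    obtain P2 Q2 where "teq ((P1 @ [e]) @ [x] @ E @ [y] @ Q) (P2 @ [x, y] @ Q2)"
      "filter (mid lo hi) P2 = filter (mid lo hi) (P1 @ [e])" "filter (mid lo hi) Q2 = filter (mid lo hi) Q" "b \<in> set Q2"
      using Cons.IH[OF Ep(1,2) Cons.prems(3)] by blast
    moreover have "filter (mid lo hi) (P1 @ [e]) = filter (mid lo hi) P1" using Ep by simp
    ultimately show ?thesis using 1 by (intro exI[of _ P2] exI[of _ Q2]) (auto intro: teq_trans)
  next
    case False
    have wy: "wit e y Q"
    proof -
      have "\<not> (min e x \<le> b \<and> b \<le> max e x)" using False Cons.prems(3) by (auto simp: wit_def)
      then have "min e y \<le> b \<and> b \<le> max e y" using e lohi assms(7,8) by (auto simp: min_def max_def split: if_splits)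
      then show ?thesis using Cons.prems(3) by (auto simp: wit_def)
    qed
    have wE: "\<forall>z\<in>set (E @ [y]). wit e z Q"
    proof
      fix z assume z: "z \<in> set (E @ [y])"
      show "wit e z Q"
      proof (cases "z = y")
        case True then show ?thesis using wy by simp
      next
        case False
        then have "z \<in> set E" using z by simp
        then have "z = lo \<or> z = hi" using Ep unfolding inr_def mid_def by (force simp: filter_empty_conv)
        then show ?thesis using e lohi Cons.prems(3) unfolding wit_def
          by (cases "e = z") (auto simp: min_def max_def intro!: bexI[where x=b])
      qed
    qed
    have 1: "teq ((P1 @ [x]) @ [e] @ (E @ [y]) @ Q) ((P1 @ [x]) @ (E @ [y]) @ [e] @ Q)"
      using wE by (rule move_right)
    obtain P2 Q2 where "teq (P1 @ [x] @ E @ [y] @ (e # Q)) (P2 @ [x, y] @ Q2)"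
      "filter (mid lo hi) P2 = filter (mid lo hi) P1" "filter (mid lo hi) Q2 = filter (mid lo hi) (e # Q)" "b \<in> set Q2"
      using Cons.IH[OF Ep(1,2), of "e # Q" P1] Cons.prems(3) by auto
    moreover have "filter (mid lo hi) (e # Q) = filter (mid lo hi) Q" using Ep by simp
    ultimately show ?thesis using 1 by (intro exI[of _ P2] exI[of _ Q2]) (auto intro: teq_trans)
  qed
qed

lemma lift_swap:
  assumes "inr lo hi w" "filter (mid lo hi) w = p @ [x, y] @ q" "wit x y q"
  shows "\<exists>w'. teq w w' \<and> filter (mid lo hi) w' = p @ [y, x] @ q"
proof (cases "x = y")
  case True then show ?thesis using assms by (intro exI[of _ w]) auto
next
  case False
  obtain b where b: "b \<in> set q" "min x y \<le> b" "b \<le> max x y" using assms(3) False by (auto simp: wit_def)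
  obtain P1 R where 1: "w = P1 @ R" "filter (mid lo hi) P1 = p" "filter (mid lo hi) R = [x, y] @ q"
    using filter_split[OF assms(2)] by blast
  obtain E0 R1 where 2: "R = E0 @ x # R1" "\<forall>u\<in>set E0. \<not> mid lo hi u" "mid lo hi x" "filter (mid lo hi) R1 = y # q"
    using filter_eq_ConsD[of "mid lo hi" R x "y # q"] 1(3) by auto
  obtain E Q where 3: "R1 = E @ y # Q" "\<forall>u\<in>set E. \<not> mid lo hi u" "mid lo hi y" "filter (mid lo hi) Q = q"
    using filter_eq_ConsD[of "mid lo hi" R1 y q] 2(4) by auto
  have bm: "mid lo hi b" using b 3(4) by auto
  have w: "w = (P1 @ E0) @ [x] @ E @ [y] @ Q" using 1 2 3 by simp
  have iE: "inr lo hi E" using assms(1) w by (auto simp: inr_def)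
  have fE: "filter (mid lo hi) E = []" using 3(2) by (simp add: filter_empty_conv)
  obtain P2 Q2 where 4: "teq w (P2 @ [x, y] @ Q2)" "filter (mid lo hi) P2 = p"
      "filter (mid lo hi) Q2 = q" "b \<in> set Q2"
    using elimE[OF iE fE False 2(3) 3(3), of b Q "P1 @ E0"] b bm 3(4) 1(2) 2(2) w
    by (auto simp: filter_empty_conv)
  have "wit x y Q2" using 4(4) b by (auto simp: wit_def)
  then have "teq (P2 @ [x, y] @ Q2) (P2 @ [y, x] @ Q2)" by (rule swap)
  then show ?thesis using 4 2(3) 3(3) by (intro exI[of _ "P2 @ [y, x] @ Q2"]) (auto intro: teq_trans)
qed

lemma inr_teq: "teq w w' \<Longrightarrow> inr lo hi w \<Longrightarrow> inr lo hi w'"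
  using teq_set by (auto simp: inr_def)

lemma lift:
  assumes "teq c0 c1" "inr lo hi w" "filter (mid lo hi) w = c0"
  shows "\<exists>w'. teq w w' \<and> filter (mid lo hi) w' = c1"
proof -
  have "(\<lambda>x y. taig_step x y \<or> taig_step y x)\<^sup>*\<^sup>* c0 c1" using assms(1) by (simp add: teq_alt)
  then show ?thesis
  proof (induction rule: rtranclp_induct)
    case base then show ?case using assms by (intro exI[of _ w]) auto
  next
    case (step u v)
    obtain w1 where w1: "teq w w1" "filter (mid lo hi) w1 = u" using step.IH by blast
    have i1: "inr lo hi w1" using inr_teq[OF w1(1) assms(2)] .
    from step.hyps(2) obtain p x y q where sw: "(u = p @ [x, y] @ q \<and> v = p @ [y, x] @ q) \<or> (v = p @ [x, y] @ q \<and> u = p @ [y, x] @ q)" "wit x y q"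
      using step_swap by metis
    show ?case
    proof (cases "u = p @ [x, y] @ q \<and> v = p @ [y, x] @ q")
      case True
      then obtain w2 where "teq w1 w2" "filter (mid lo hi) w2 = v" using lift_swap[OF i1 _ sw(2)] w1(2) by metis
      then show ?thesis using w1 by (auto intro: teq_trans)
    next
      case False
      then have "v = p @ [x, y] @ q" "u = p @ [y, x] @ q" using sw(1) by auto
      moreover have "wit y x q" using sw(2) by (simp add: wit_commute)
      ultimately obtain w2 where "teq w1 w2" "filter (mid lo hi) w2 = v" using lift_swap[OF i1, of p y x q] w1(2) by metis
      then show ?thesis using w1 by (auto intro: teq_trans)
    qed
  qed
qed

definition adj :: "nat list \<Rightarrow> nat list \<Rightarrow> bool" where
  "adj u v = (\<exists>x y. teq u (x @ y) \<and> teq v (y @ x))"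

lemma adj_refl[simp]: "adj u u"
  unfolding adj_def by (intro exI[of _ "[]"] exI[of _ u]) simp

lemma adj_sym: "adj u v \<Longrightarrow> adj v u"
  unfolding adj_def by blast

lemma adj_rot: "adj (x @ y) (y @ x)"
  unfolding adj_def by (intro exI[of _ x] exI[of _ y]) simp

lemma adj_teq1: "teq u u' \<Longrightarrow> adj u' v \<Longrightarrow> adj u v"
  unfolding adj_def using teq_trans by blast

lemma adj_teq2: "teq v v' \<Longrightarrow> adj u v' \<Longrightarrow> adj u v"
  unfolding adj_def using teq_trans by blast

lemma teq_adj: "teq u v \<Longrightarrow> adj u v"
  using adj_teq2[OF _ adj_refl] teq_sym by blast

lemma adj_mset: "adj u v \<Longrightarrow> mset u = mset v"
  unfolding adj_def using teq_mset by (metis mset_append union_commute)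

lemma relpow_adj_refl: "(adj ^^ k) u u"
  by (induction k) (auto intro: relpowp_Suc_I)

lemma relpow_adj_mono: "(adj ^^ k) u v \<Longrightarrow> k \<le> k' \<Longrightarrow> (adj ^^ k') u v"
proof -
  assume a: "(adj ^^ k) u v" "k \<le> k'"
  then obtain d where "k' = k + d" by (metis le_iff_add)
  moreover have "(adj ^^ (k + d)) u v" using relpowp_trans[OF a(1) relpow_adj_refl] .
  ultimately show ?thesis by simp
qed

lemma relpow_adj_mset: "(adj ^^ k) u v \<Longrightarrow> mset u = mset v"
  by (induction k arbitrary: v) (auto elim: relpowp_Suc_E dest: adj_mset)

lemma lift_adj:
  assumes "adj c0 c1" "inr lo hi w" "teq (filter (mid lo hi) w) c0"
  shows "\<exists>w'. adj w w' \<and> inr lo hi w' \<and> teq (filter (mid lo hi) w') c1"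
proof -
  obtain x y where xy: "teq c0 (x @ y)" "teq c1 (y @ x)" using assms(1) unfolding adj_def by blast
  have "teq (filter (mid lo hi) w) (x @ y)" using assms(3) xy(1) teq_trans by blast
  then obtain w1 where w1: "teq w w1" "filter (mid lo hi) w1 = x @ y"
    using lift[OF _ assms(2) refl] by blast
  obtain X Y where XY: "w1 = X @ Y" "filter (mid lo hi) X = x" "filter (mid lo hi) Y = y"
    using filter_split[OF w1(2)] by blast
  have "adj w (Y @ X)" using w1(1) XY(1) adj_rot adj_teq1 by blast
  moreover have "inr lo hi (Y @ X)" using inr_teq[OF w1(1) assms(2)] XY(1) by (auto simp: inr_def)
  moreover have "teq (filter (mid lo hi) (Y @ X)) c1" using XY xy(2) teq_sym by simp
  ultimately show ?thesis by blast
qed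

lemma lift_path:
  assumes "(adj ^^ k) c0 c1" "inr lo hi w" "teq (filter (mid lo hi) w) c0"
  shows "\<exists>w'. (adj ^^ k) w w' \<and> inr lo hi w' \<and> teq (filter (mid lo hi) w') c1"
  using assms(1)
proof (induction k arbitrary: c1)
  case 0 then show ?case using assms by auto
next
  case (Suc k)
  then obtain c where c: "(adj ^^ k) c0 c" "adj c c1" by (auto elim: relpowp_Suc_E)
  obtain w1 where w1: "(adj ^^ k) w w1" "inr lo hi w1" "teq (filter (mid lo hi) w1) c" using Suc.IH c(1) by blast
  obtain w2 where "adj w1 w2" "inr lo hi w2" "teq (filter (mid lo hi) w2) c1" using lift_adj[OF c(2) w1(2,3)] by blast
  then show ?case using w1(1) by (auto intro: relpowp_Suc_I)
qed

lemma decomp3: "filter P w = xs @ [a] @ ys \<Longrightarrow> \<exists>A B. w = A @ [a] @ B \<and> filter P A = xs \<and> filter P B = ys"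
proof -
  assume "filter P w = xs @ [a] @ ys"
  then obtain W1 W2 where 1: "w = W1 @ W2" "filter P W1 = xs" "filter P W2 = a # ys"
    using filter_split[of P w xs "[a] @ ys"] by auto
  then obtain E B where 2: "W2 = E @ a # B" "\<forall>u\<in>set E. \<not> P u" "ys = filter P B"
    using filter_eq_ConsD[OF 1(3)] by blast
  have "filter P (W1 @ E) = xs" using 1(2) 2(2) by (simp add: filter_empty_conv)
  then show ?thesis using 1(1) 2 by (intro exI[of _ "W1 @ E"] exI[of _ B]) simp
qed

lemma sortD:
  assumes "lo < hi" "set D \<subseteq> {lo, hi}" "b \<in> set q" "lo \<le> b" "b \<le> hi"
  shows "teq (p @ D @ q) (p @ replicate (count (mset D) hi) hi @ replicate (count (mset D) lo) lo @ q)"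
proof -
  have 1: "teq (p @ D @ q) (p @ filter (\<lambda>z. z = hi) D @ filter (\<lambda>z. \<not> z = hi) D @ q)"
  proof (rule partition_seg, intro ballI impI)
    fix x y assume "x \<in> set D" "y \<in> set D" "x = hi" "\<not> y = hi"
    then have "y = lo" using assms(2) by auto
    then show "wit y x q" using assms \<open>x = hi\<close> unfolding wit_def by (auto simp: min_def max_def intro!: bexI[where x=b])
  qed
  have 2: "filter (\<lambda>z. z = hi) D = replicate (count (mset D) hi) hi"
    by (simp add: replicate_count_mset_eq_filter_eq) (metis (mono_tags, lifting) filter_cong)
  have "filter (\<lambda>z. \<not> z = hi) D = filter (\<lambda>z. z = lo) D"
    using assms(1,2) by (intro filter_cong) auto
  also have "\<dots> = replicate (count (mset D) lo) lo"
    by (simp add: replicate_count_mset_eq_filter_eq) (metis (mono_tags, lifting) filter_cong)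
  finally show ?thesis using 1 2 by simp
qed

lemma count_final:
  assumes "mset x = mset (R @ replicate i hi @ replicate j lo @ U)" "\<forall>z\<in>set R. mid lo hi z" "\<forall>z\<in>set U. mid lo hi z"
    "lo < hi" "count (mset x) lo = a" "count (mset x) hi = b"
  shows "i = b \<and> j = a"
proof -
  have m: "mset x = mset (R @ replicate i hi @ replicate j lo @ U)" using assms(1) .
  have r: "count (mset R) lo = 0" "count (mset R) hi = 0" "count (mset U) lo = 0" "count (mset U) hi = 0"
    using assms(2,3) by (auto simp: mid_def count_eq_zero_iff)
  have "count (mset x) hi = i" using m r assms(4) by simp
  moreover have "count (mset x) lo = j" using m r assms(4) by simp
  ultimately show ?thesis using assms(5,6) by simp
qed

lemma hub_empty:
  assumes "lo < hi" "inr lo hi x" "filter (mid lo hi) x = []" "count (mset x) lo = a" "count (mset x) hi = b"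
  shows "adj x (replicate a lo @ replicate b hi)"
proof (cases "x = []")
  case True then show ?thesis using assms by simp
next
  case False
  then obtain x' e where x: "x = x' @ [e]" by (metis append_butlast_last_id)
  have D: "set x \<subseteq> {lo, hi}" using assms(2,3) unfolding inr_def mid_def
    by (force simp: filter_empty_conv)
  then have D': "set x' \<subseteq> {lo, hi}" "e = lo \<or> e = hi" using x by auto
  show ?thesis
  proof (cases "e = hi")
    case True
    have 1: "teq ([] @ x' @ [e]) ([] @ filter (\<lambda>z. z = lo) x' @ filter (\<lambda>z. \<not> z = lo) x' @ [e])"
    proof (rule partition_seg, intro ballI impI)
      fix u v assume "u \<in> set x'" "v \<in> set x'" "u = lo" "\<not> v = lo"
      then have "v = hi" using D' by auto
      then show "wit v u [e]" using True \<open>u = lo\<close> assms(1) by (auto simp: wit_def)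
    qed
    have "filter (\<lambda>z. z = lo) x' @ filter (\<lambda>z. \<not> z = lo) x' @ [e] =
          replicate (count (mset x') lo) lo @ replicate (count (mset x') hi) hi @ [hi]"
    proof -
      have "filter (\<lambda>z. z = lo) x' = replicate (count (mset x') lo) lo"
        by (simp add: replicate_count_mset_eq_filter_eq) (metis (mono_tags, lifting) filter_cong)
      moreover have "filter (\<lambda>z. \<not> z = lo) x' = filter (\<lambda>z. z = hi) x'" using D' assms(1) by (intro filter_cong) auto
      moreover have "filter (\<lambda>z. z = hi) x' = replicate (count (mset x') hi) hi"
        by (simp add: replicate_count_mset_eq_filter_eq) (metis (mono_tags, lifting) filter_cong)
      ultimately show ?thesis using True by simp
    qed
    moreover have "count (mset x') lo = a" "b = Suc (count (mset x') hi)" using assms(1,4,5) x True by auto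
    moreover have "replicate (count (mset x') hi) hi @ [hi] = replicate (Suc (count (mset x') hi)) hi"
      by (simp add: replicate_append_same)
    ultimately have "teq x (replicate a lo @ replicate b hi)" using 1 x by simp
    then show ?thesis by (rule teq_adj)
  next
    case False
    then have eL: "e = lo" using D' by auto
    have 1: "teq ([] @ x' @ [e]) ([] @ filter (\<lambda>z. z = hi) x' @ filter (\<lambda>z. \<not> z = hi) x' @ [e])"
    proof (rule partition_seg, intro ballI impI)
      fix u v assume "u \<in> set x'" "v \<in> set x'" "u = hi" "\<not> v = hi"
      then have "v = lo" using D' by auto
      then show "wit v u [e]" using eL \<open>u = hi\<close> assms(1) by (auto simp: wit_def)
    qed
    have "filter (\<lambda>z. z = hi) x' @ filter (\<lambda>z. \<not> z = hi) x' @ [e] =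
          replicate (count (mset x') hi) hi @ replicate (count (mset x') lo) lo @ [lo]"
    proof -
      have "filter (\<lambda>z. z = hi) x' = replicate (count (mset x') hi) hi"
        by (simp add: replicate_count_mset_eq_filter_eq) (metis (mono_tags, lifting) filter_cong)
      moreover have "filter (\<lambda>z. \<not> z = hi) x' = filter (\<lambda>z. z = lo) x'" using D' assms(1) by (intro filter_cong) auto
      moreover have "filter (\<lambda>z. z = lo) x' = replicate (count (mset x') lo) lo"
        by (simp add: replicate_count_mset_eq_filter_eq) (metis (mono_tags, lifting) filter_cong)
      ultimately show ?thesis using eL by simp
    qed
    moreover have "count (mset x') hi = b" "a = Suc (count (mset x') lo)" using assms(1,4,5) x eL by auto
    moreover have "replicate (count (mset x') lo) lo @ [lo] = replicate (Suc (count (mset x') lo)) lo"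
      by (simp add: replicate_append_same)
    ultimately have "teq x (replicate b hi @ replicate a lo)" using 1 x by simp
    then show ?thesis using adj_rot[of "replicate b hi" "replicate a lo"] adj_teq1 by blast
  qed
qed

lemma filter_nhi_mid: "filter (mid lo hi) (filter (\<lambda>z. z \<noteq> hi) A) = filter (mid lo hi) A"
  by (induction A) (auto simp: mid_def)

lemma filter_nlo_mid: "filter (mid lo hi) (filter (\<lambda>z. z \<noteq> lo) A) = filter (mid lo hi) A"
  by (induction A) (auto simp: mid_def)

lemma nmid_cases: "inr lo hi w \<Longrightarrow> z \<in> set w \<Longrightarrow> \<not> mid lo hi z \<Longrightarrow> z = lo \<or> z = hi"
  unfolding inr_def mid_def by force

lemma in_filt: "filter P w = c \<Longrightarrow> z \<in> set w \<Longrightarrow> P z \<Longrightarrow> z \<in> set c"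
  by auto

lemma hub_mu:
  assumes lh: "lo < hi" and cm: "\<forall>z\<in>set c. mid lo hi z" and cne: "c \<noteq> []" and lst: "last c = Max (set c)"
  shows "\<exists>h. \<forall>x. inr lo hi x \<and> teq (filter (mid lo hi) x) c \<and> count (mset x) lo = a \<and> count (mset x) hi = b \<longrightarrow> adj x h"
proof -
  define mu where "mu = Max (set c)"
  define nu where "nu = Min (set c)"
  have fin: "finite (set c)" "set c \<noteq> {}" using cne by auto
  have nuin: "nu \<in> set c" using Min_in[OF fin] nu_def by simp
  have muin: "mu \<in> set c" using Max_in[OF fin] mu_def by simp
  have bnd: "\<forall>z\<in>set c. nu \<le> z \<and> z \<le> mu" using fin nu_def mu_def by auto
  obtain U0 R where c: "c = U0 @ nu # R" using split_list[OF nuin] by blast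
  have mnu: "lo < nu" "nu < hi" and mmu: "lo < mu" "mu < hi" using cm nuin muin by (auto simp: mid_def)
  have U0m: "\<forall>z\<in>set U0. mid lo hi z" using cm c by auto
  have mmu': "mid lo hi mu" and mnu': "mid lo hi nu" using mmu mnu by (auto simp: mid_def)
  show ?thesis
  proof (cases "R = []")
    case True
    then have "last c = nu" using c by simp
    then have munu: "mu = nu" using lst mu_def by simp
    define h where "h = replicate b hi @ replicate a lo @ U0 @ [nu]"
    show ?thesis
    proof (intro exI[of _ h] allI impI)
      fix x assume H: "inr lo hi x \<and> teq (filter (mid lo hi) x) c \<and> count (mset x) lo = a \<and> count (mset x) hi = b"
      obtain x1 where x1: "teq x x1" "filter (mid lo hi) x1 = c" using lift[of "filter (mid lo hi) x" c lo hi x] H by auto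
      have i1: "inr lo hi x1" using inr_teq[OF x1(1)] H by blast
      obtain A B where AB: "x1 = A @ [nu] @ B" "filter (mid lo hi) A = U0" "filter (mid lo hi) B = []"
        using decomp3[of "mid lo hi" x1 U0 nu "[]"] x1(2) c True by auto
      have a1: "adj x1 (B @ A @ [nu])" using AB(1) adj_rot[of "A @ [nu]" B] by simp
      have p1: "teq (B @ A @ [nu]) (B @ filter (\<lambda>z. \<not> mid lo hi z) A @ filter (\<lambda>z. \<not> \<not> mid lo hi z) A @ [nu])"
      proof (rule partition_seg, intro ballI impI)
        fix u v assume uv: "u \<in> set A" "v \<in> set A" "\<not> mid lo hi u" "\<not> \<not> mid lo hi v"
        then have "v \<in> set U0" using in_filt[OF AB(2)] by blast
        then have "v \<in> set c" using c by simp
        then have "nu \<le> v \<and> v \<le> mu" using bnd by blast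
        then have "v = nu" using munu by simp
        then show "wit v u [nu]" by (auto simp: wit_def)
      qed
      have f2: "filter (\<lambda>z. \<not> \<not> mid lo hi z) A = U0" using AB(2) by simp
      have D: "set (B @ filter (\<lambda>z. \<not> mid lo hi z) A) \<subseteq> {lo, hi}"
      proof
        fix z assume z: "z \<in> set (B @ filter (\<lambda>z. \<not> mid lo hi z) A)"
        then have "z \<in> set x1" "\<not> mid lo hi z" using AB(1,3) by (auto simp: filter_empty_conv)
        then show "z \<in> {lo, hi}" using nmid_cases[OF i1] by blast
      qed
      have p2: "teq ([] @ (B @ filter (\<lambda>z. \<not> mid lo hi z) A) @ (U0 @ [nu]))
         ([] @ replicate (count (mset (B @ filter (\<lambda>z. \<not> mid lo hi z) A)) hi) hi @
          replicate (count (mset (B @ filter (\<lambda>z. \<not> mid lo hi z) A)) lo) lo @ (U0 @ [nu]))"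
        by (rule sortD[OF lh D]) (use mnu in auto)
      define i where "i = count (mset (B @ filter (\<lambda>z. \<not> mid lo hi z) A)) hi"
      define j where "j = count (mset (B @ filter (\<lambda>z. \<not> mid lo hi z) A)) lo"
      have tt: "teq (B @ A @ [nu]) ([] @ replicate i hi @ replicate j lo @ (U0 @ [nu]))"
      proof -
        have "teq (B @ A @ [nu]) (B @ filter (\<lambda>z. \<not> mid lo hi z) A @ U0 @ [nu])" using p1 f2 by simp
        also have "teq \<dots> ([] @ replicate i hi @ replicate j lo @ (U0 @ [nu]))" using p2 i_def j_def by simp
        finally show ?thesis .
      qed
      have "mset x = mset x1" using teq_mset[OF x1(1)] .
      also have "\<dots> = mset (B @ A @ [nu])" using adj_mset[OF a1] .
      also have "\<dots> = mset ([] @ replicate i hi @ replicate j lo @ (U0 @ [nu]))" using teq_mset[OF tt] .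
      finally have "i = b \<and> j = a" using count_final[of x "[]" i hi j lo "U0 @ [nu]"] lh H U0m mnu
        by (auto simp: mid_def)
      then have "teq (B @ A @ [nu]) h" using tt h_def by simp
      then show "adj x h" using x1(1) a1 adj_teq1 adj_teq2 teq_sym by blast
    qed
  next
    case False
    then have lR: "last R = mu" using lst c mu_def by simp
    define R0 where "R0 = butlast R"
    have R: "R = R0 @ [mu]" using append_butlast_last_id[OF False] lR R0_def by simp
    have R0m: "\<forall>z\<in>set R0. mid lo hi z" using cm c R by auto
    define h where "h = R0 @ [mu] @ replicate b hi @ replicate a lo @ U0 @ [nu]"
    show ?thesis
    proof (intro exI[of _ h] allI impI)
      fix x assume H: "inr lo hi x \<and> teq (filter (mid lo hi) x) c \<and> count (mset x) lo = a \<and> count (mset x) hi = b"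
      obtain x1 where x1: "teq x x1" "filter (mid lo hi) x1 = c" using lift[of "filter (mid lo hi) x" c lo hi x] H by auto
      have i1: "inr lo hi x1" using inr_teq[OF x1(1)] H by blast
      obtain A B where AB: "x1 = A @ [nu] @ B" "filter (mid lo hi) A = U0" "filter (mid lo hi) B = R0 @ [mu]"
        using decomp3[of "mid lo hi" x1 U0 nu "R0 @ [mu]"] x1(2) c R by auto
      obtain B0 T where BT: "B = B0 @ [mu] @ T" "filter (mid lo hi) B0 = R0" "filter (mid lo hi) T = []"
        using decomp3[of "mid lo hi" B R0 mu "[]"] AB(3) by auto
      define S where "S = A @ [nu] @ B0"
      have x1S: "x1 = S @ [mu] @ T" using AB BT S_def by simp
      have p1: "teq ([] @ S @ ([mu] @ T)) ([] @ filter (\<lambda>z. z = hi) S @ filter (\<lambda>z. \<not> z = hi) S @ ([mu] @ T))"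
      proof (rule partition_seg, intro ballI impI)
        fix u v assume uv: "u \<in> set S" "v \<in> set S" "u = hi" "\<not> v = hi"
        have "v \<le> mu"
        proof (cases "mid lo hi v")
          case True
          have "v \<in> set x1" using uv(2) x1S by simp
          then have "v \<in> set c" using in_filt[OF x1(2)] True by blast
          then show ?thesis using bnd by auto
        next
          case False
          then have "v = lo" using nmid_cases[OF i1, of v] uv x1S by auto
          then show ?thesis using mmu by simp
        qed
        then show "wit v u ([mu] @ T)" using uv(3) mmu unfolding wit_def by (auto simp: min_def max_def)
      qed
      define Hs where "Hs = filter (\<lambda>z. z = hi) S"
      define A' where "A' = filter (\<lambda>z. z \<noteq> hi) A"
      define B0' where "B0' = filter (\<lambda>z. z \<noteq> hi) B0"
      have fS: "filter (\<lambda>z. \<not> z = hi) S = A' @ [nu] @ B0'" using S_def A'_def B0'_def mnu by simp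
      have t1: "teq x1 (Hs @ A' @ [nu] @ B0' @ [mu] @ T)" using p1 x1S fS Hs_def by simp
      have a2: "adj (Hs @ A' @ [nu] @ B0' @ [mu] @ T) (B0' @ [mu] @ T @ Hs @ A' @ [nu])"
        using adj_rot[of "Hs @ A' @ [nu]" "B0' @ [mu] @ T"] by simp
      have i2: "inr lo hi (Hs @ A' @ [nu] @ B0' @ [mu] @ T)" using inr_teq[OF t1 i1] .
      have B0'l: "\<forall>z\<in>set B0'. \<not> mid lo hi z \<longrightarrow> z = lo" using i2 nmid_cases[OF i2] B0'_def by auto
      have A'l: "\<forall>z\<in>set A'. \<not> mid lo hi z \<longrightarrow> z = lo" using i2 nmid_cases[OF i2] A'_def by auto
      have fB0': "filter (mid lo hi) B0' = R0" using BT(2) unfolding B0'_def by (simp only: filter_nhi_mid)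
      have fA': "filter (mid lo hi) A' = U0" using AB(2) unfolding A'_def by (simp only: filter_nhi_mid)
      have midc: "\<forall>z. mid lo hi z \<longrightarrow> z \<in> set x1 \<longrightarrow> nu \<le> z \<and> z \<le> mu"
        using bnd in_filt[OF x1(2)] by blast
      have p3: "teq ([] @ (B0' @ [mu]) @ (T @ Hs @ A' @ [nu]))
                ([] @ filter (mid lo hi) (B0' @ [mu]) @ filter (\<lambda>z. \<not> mid lo hi z) (B0' @ [mu]) @ (T @ Hs @ A' @ [nu]))"
      proof (rule partition_seg, intro ballI impI)
        fix u v assume uv: "u \<in> set (B0' @ [mu])" "v \<in> set (B0' @ [mu])" "mid lo hi u" "\<not> mid lo hi v"
        have "v = lo" using uv B0'l mmu by (auto simp: mid_def)
        moreover have "u \<in> set x1" using uv(1) AB BT B0'_def x1S by auto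
        ultimately show "wit v u (T @ Hs @ A' @ [nu])" using midc uv(3) mnu unfolding wit_def
          by (auto simp: min_def max_def intro!: bexI[where x=nu])
      qed
      define Ls1 where "Ls1 = filter (\<lambda>z. \<not> mid lo hi z) (B0' @ [mu])"
      have fm3: "filter (mid lo hi) (B0' @ [mu]) = R0 @ [mu]" using fB0' mmu by (simp add: mid_def)
      have p4: "teq ((R0 @ [mu] @ Ls1 @ T @ Hs) @ A' @ [nu])
                ((R0 @ [mu] @ Ls1 @ T @ Hs) @ filter (\<lambda>z. \<not> mid lo hi z) A' @ filter (\<lambda>z. \<not> \<not> mid lo hi z) A' @ [nu])"
      proof (rule partition_seg, intro ballI impI)
        fix u v assume uv: "u \<in> set A'" "v \<in> set A'" "\<not> mid lo hi u" "\<not> \<not> mid lo hi v"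
        have "u = lo" using uv A'l by auto
        moreover have "v \<in> set x1" using uv(2) AB A'_def by auto
        ultimately show "wit v u [nu]" using midc uv(4) mnu unfolding wit_def by (auto simp: min_def max_def)
      qed
      define Ls2 where "Ls2 = filter (\<lambda>z. \<not> mid lo hi z) A'"
      have f4: "filter (\<lambda>z. \<not> \<not> mid lo hi z) A' = U0" using fA' by simp
      define D where "D = Ls1 @ T @ Hs @ Ls2"
      have Dset: "set D \<subseteq> {lo, hi}"
      proof
        fix z assume zD: "z \<in> set D"
        have nm: "\<not> mid lo hi hi" by (simp add: mid_def)
        have "z \<in> set (Hs @ A' @ [nu] @ B0' @ [mu] @ T) \<and> \<not> mid lo hi z"
        proof -
          consider "z \<in> set Ls1" | "z \<in> set T" | "z \<in> set Hs" | "z \<in> set Ls2" using zD D_def by auto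
          then show ?thesis
          proof cases
            case 1 then show ?thesis using mmu' unfolding Ls1_def by auto
          next
            case 2 then show ?thesis using BT(3) by (auto simp: filter_empty_conv)
          next
            case 3 then show ?thesis using nm unfolding Hs_def by auto
          next
            case 4 then show ?thesis unfolding Ls2_def by auto
          qed
        qed
        then show "z \<in> {lo, hi}" using nmid_cases[OF i2] by blast
      qed
      have p5: "teq ((R0 @ [mu]) @ D @ (U0 @ [nu]))
         ((R0 @ [mu]) @ replicate (count (mset D) hi) hi @ replicate (count (mset D) lo) lo @ (U0 @ [nu]))"
        by (rule sortD[OF lh Dset]) (use mnu in auto)
      define i where "i = count (mset D) hi"
      define j where "j = count (mset D) lo"
      have tt: "teq (B0' @ [mu] @ T @ Hs @ A' @ [nu]) ((R0 @ [mu]) @ replicate i hi @ replicate j lo @ (U0 @ [nu]))"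
      proof -
        have "teq (B0' @ [mu] @ T @ Hs @ A' @ [nu]) (R0 @ [mu] @ Ls1 @ T @ Hs @ A' @ [nu])"
          using p3 fm3 Ls1_def mmu' by simp
        also have "teq \<dots> (R0 @ [mu] @ Ls1 @ T @ Hs @ Ls2 @ U0 @ [nu])"
          using p4 f4 Ls2_def mnu' by simp
        also have "teq \<dots> ((R0 @ [mu]) @ replicate i hi @ replicate j lo @ (U0 @ [nu]))"
          using p5 D_def i_def j_def by simp
        finally show ?thesis .
      qed
      have "mset x = mset x1" using teq_mset[OF x1(1)] .
      also have "\<dots> = mset (Hs @ A' @ [nu] @ B0' @ [mu] @ T)" using teq_mset[OF t1] .
      also have "\<dots> = mset (B0' @ [mu] @ T @ Hs @ A' @ [nu])" using adj_mset[OF a2] .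
      also have "\<dots> = mset ((R0 @ [mu]) @ replicate i hi @ replicate j lo @ (U0 @ [nu]))" using teq_mset[OF tt] .
      finally have "i = b \<and> j = a" using count_final[of x "R0 @ [mu]" i hi j lo "U0 @ [nu]"] lh H U0m R0m mnu mmu
        by (auto simp: mid_def)
      then have "teq (B0' @ [mu] @ T @ Hs @ A' @ [nu]) h" using tt h_def by simp
      then show "adj x h" using teq_trans[OF x1(1) t1] a2 adj_teq1 adj_teq2 teq_sym by blast
    qed
  qed
qed

lemma construct_c:
  assumes "c = c0 @ [rho]" "nu \<in> set c" "mu \<in> set c" "nu < rho" "rho < mu"
  shows "\<exists>U1 R'. teq c (U1 @ [nu, mu] @ R') \<and> R' \<noteq> [] \<and> rho \<in> set R'"
proof -
  have 1: "teq ([] @ c0 @ [rho]) ([] @ filter (\<lambda>z. z < rho) c0 @ filter (\<lambda>z. \<not> z < rho) c0 @ [rho])"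
    by (rule partition_seg) (auto simp: wit_def min_def max_def)
  define l where "l = filter (\<lambda>z. z < rho) c0"
  define r where "r = filter (\<lambda>z. \<not> z < rho) c0"
  have "nu \<in> set l" using assms l_def by auto
  then obtain l1 l2 where l: "l = l1 @ nu # l2" using split_list by metis
  have "mu \<in> set r" using assms r_def by auto
  then obtain r1 r2 where r: "r = r1 @ mu # r2" using split_list by metis
  have ll: "\<forall>z\<in>set l. z < rho" and rr: "\<forall>z\<in>set r. rho \<le> z" using l_def r_def by auto
  have 2: "teq ((l1 @ [nu]) @ (l2 @ r1 @ [mu]) @ (r2 @ [rho]))
               ((l1 @ [nu]) @ filter (\<lambda>z. rho \<le> z) (l2 @ r1 @ [mu]) @ filter (\<lambda>z. \<not> rho \<le> z) (l2 @ r1 @ [mu]) @ (r2 @ [rho]))"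
    by (rule partition_seg) (auto simp: wit_def min_def max_def)
  have l2r: "\<forall>z\<in>set l2. z < rho" "\<forall>z\<in>set r1. rho \<le> z" using ll rr l r by auto
  have e1: "filter (\<lambda>z. rho \<le> z) l2 = []" using l2r(1) by (induction l2) auto
  have e2: "filter (\<lambda>z. rho \<le> z) r1 = r1" using l2r(2) by (induction r1) auto
  have e3: "filter (\<lambda>z. \<not> rho \<le> z) l2 = l2" using l2r(1) by (induction l2) auto
  have e4: "filter (\<lambda>z. \<not> rho \<le> z) r1 = []" using l2r(2) by (induction r1) auto
  have f2a: "filter (\<lambda>z. rho \<le> z) (l2 @ r1 @ [mu]) = r1 @ [mu]" using e1 e2 assms(5) by simp
  have f2b: "filter (\<lambda>z. \<not> rho \<le> z) (l2 @ r1 @ [mu]) = l2" using e3 e4 assms(5) by simp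
  have 3: "teq (l1 @ ([nu] @ r1) @ ([mu] @ l2 @ r2 @ [rho]))
               (l1 @ filter (\<lambda>z. rho \<le> z) ([nu] @ r1) @ filter (\<lambda>z. \<not> rho \<le> z) ([nu] @ r1) @ ([mu] @ l2 @ r2 @ [rho]))"
    by (rule partition_seg) (auto simp: wit_def min_def max_def)
  have f3a: "filter (\<lambda>z. rho \<le> z) ([nu] @ r1) = r1" using e2 assms(4) by simp
  have f3b: "filter (\<lambda>z. \<not> rho \<le> z) ([nu] @ r1) = [nu]" using e4 assms(4) by simp
  have "teq c (l @ r @ [rho])" using 1 assms(1) l_def r_def by simp
  also have "teq \<dots> ((l1 @ [nu]) @ (l2 @ r1 @ [mu]) @ (r2 @ [rho]))" using l r by simp
  also have "teq \<dots> (l1 @ ([nu] @ r1) @ ([mu] @ l2 @ r2 @ [rho]))" using 2 unfolding f2a f2b by simp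
  also have "teq \<dots> ((l1 @ r1) @ [nu, mu] @ (l2 @ r2 @ [rho]))" using 3 unfolding f3a f3b by simp
  finally show ?thesis by (intro exI[of _ "l1 @ r1"] exI[of _ "l2 @ r2 @ [rho]"]) simp
qed

lemma hub_mid:
  assumes lh: "lo < hi" and cm: "\<forall>z\<in>set c. mid lo hi z" and cne: "c \<noteq> []"
    and l1: "Min (set c) < last c" and l2: "last c < Max (set c)"
  shows "\<exists>h. \<forall>x. inr lo hi x \<and> teq (filter (mid lo hi) x) c \<and> count (mset x) lo = a \<and> count (mset x) hi = b \<longrightarrow> adj x h"
proof -
  define mu where "mu = Max (set c)"
  define nu where "nu = Min (set c)"
  define rho where "rho = last c"
  have fin: "finite (set c)" "set c \<noteq> {}" using cne by auto
  have nuin: "nu \<in> set c" using Min_in[OF fin] nu_def by simp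
  have muin: "mu \<in> set c" using Max_in[OF fin] mu_def by simp
  have bnd: "\<forall>z\<in>set c. nu \<le> z \<and> z \<le> mu" using fin nu_def mu_def by auto
  have c: "c = butlast c @ [rho]" using cne rho_def by simp
  obtain U1 R' where c': "teq c (U1 @ [nu, mu] @ R')" "R' \<noteq> []" "rho \<in> set R'"
    using construct_c[OF c nuin muin] l1 l2 nu_def mu_def rho_def by blast
  have setc': "set (U1 @ [nu, mu] @ R') = set c" using teq_set[OF c'(1)] by simp
  have mnu: "lo < nu" "nu < hi" and mmu: "lo < mu" "mu < hi" using cm nuin muin by (auto simp: mid_def)
  have mmu': "mid lo hi mu" and mnu': "mid lo hi nu" using mmu mnu by (auto simp: mid_def)
  have mrho: "mid lo hi rho" using cm cne rho_def by simp
  have U1m: "\<forall>z\<in>set U1. mid lo hi z" and R'm: "\<forall>z\<in>set R'. mid lo hi z" using cm setc' by auto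
  define h where "h = R' @ replicate b hi @ replicate a lo @ U1 @ [nu, mu]"
  show ?thesis
  proof (intro exI[of _ h] allI impI)
    fix x assume H: "inr lo hi x \<and> teq (filter (mid lo hi) x) c \<and> count (mset x) lo = a \<and> count (mset x) hi = b"
    have "teq (filter (mid lo hi) x) (U1 @ [nu, mu] @ R')" using H c'(1) teq_trans by blast
    then obtain x1 where x1: "teq x x1" "filter (mid lo hi) x1 = U1 @ [nu, mu] @ R'"
      using lift[of "filter (mid lo hi) x" _ lo hi x] H by auto
    have i1: "inr lo hi x1" using inr_teq[OF x1(1)] H by blast
    have midc: "\<forall>z. mid lo hi z \<longrightarrow> z \<in> set x1 \<longrightarrow> nu \<le> z \<and> z \<le> mu"
      using bnd in_filt[OF x1(2)] setc' by blast
    obtain A B1 where AB: "x1 = A @ [nu] @ B1" "filter (mid lo hi) A = U1" "filter (mid lo hi) B1 = [mu] @ R'"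
      using decomp3[of "mid lo hi" x1 U1 nu "[mu] @ R'"] x1(2) by auto
    obtain E B where EB: "B1 = E @ [mu] @ B" "filter (mid lo hi) E = []" "filter (mid lo hi) B = R'"
      using decomp3[of "mid lo hi" B1 "[]" mu R'] AB(3) by auto
    have rhoB: "rho \<in> set B" using EB(3) c'(3) by (metis filter_is_subset subsetD)
    have x1e: "x1 = A @ [nu] @ E @ [mu] @ B" using AB EB by simp
    have Elh: "\<forall>z\<in>set E. z = lo \<or> z = hi" using nmid_cases[OF i1] EB(2) x1e
      by (auto simp: filter_empty_conv)
    have p1: "teq ((A @ [nu]) @ (E @ [mu]) @ B) ((A @ [nu]) @ filter (\<lambda>z. z \<noteq> lo) (E @ [mu]) @ filter (\<lambda>z. \<not> z \<noteq> lo) (E @ [mu]) @ B)"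
    proof (rule partition_seg, intro ballI impI)
      fix u v assume uv: "u \<in> set (E @ [mu])" "v \<in> set (E @ [mu])" "u \<noteq> lo" "\<not> v \<noteq> lo"
      have "u = hi \<or> u = mu" using uv Elh by auto
      then show "wit v u B" using uv(4) rhoB mrho mmu l2 mu_def rho_def unfolding wit_def mid_def
        by (auto simp: min_def max_def intro!: bexI[where x=rho])
    qed
    define Eh where "Eh = filter (\<lambda>z. z \<noteq> lo) E"
    define El where "El = filter (\<lambda>z. \<not> z \<noteq> lo) E"
    have fp1a: "filter (\<lambda>z. z \<noteq> lo) (E @ [mu]) = Eh @ [mu]" using Eh_def mmu by simp
    have fp1b: "filter (\<lambda>z. \<not> z \<noteq> lo) (E @ [mu]) = El" using El_def mmu by simp
    have t1: "teq x1 (A @ [nu] @ Eh @ [mu] @ El @ B)"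
      using p1 x1e unfolding fp1a fp1b by simp
    have a2: "adj (A @ [nu] @ Eh @ [mu] @ El @ B) (El @ B @ A @ [nu] @ Eh @ [mu])"
      using adj_rot[of "A @ [nu] @ Eh @ [mu]" "El @ B"] by simp
    have i2: "inr lo hi (A @ [nu] @ Eh @ [mu] @ El @ B)" using inr_teq[OF t1 i1] .
    have midc2: "\<forall>z. mid lo hi z \<longrightarrow> z \<in> set (A @ [nu] @ Eh @ [mu] @ El @ B) \<longrightarrow> nu \<le> z \<and> z \<le> mu"
      using midc teq_set[OF t1] by blast
    have p3: "teq ([] @ (El @ B) @ (A @ [nu] @ Eh @ [mu]))
              ([] @ filter (mid lo hi) (El @ B) @ filter (\<lambda>z. \<not> mid lo hi z) (El @ B) @ (A @ [nu] @ Eh @ [mu]))"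
    proof (rule partition_seg, intro ballI impI)
      fix u v assume uv: "u \<in> set (El @ B)" "v \<in> set (El @ B)" "mid lo hi u" "\<not> mid lo hi v"
      have "v = lo \<or> v = hi" using nmid_cases[OF i2, of v] uv by auto
      moreover have "nu \<le> u \<and> u \<le> mu" using midc2 uv by auto
      ultimately show "wit v u (A @ [nu] @ Eh @ [mu])" using mnu mmu unfolding wit_def
        by (auto simp: min_def max_def)
    qed
    define DY where "DY = filter (\<lambda>z. \<not> mid lo hi z) (El @ B)"
    have fY: "filter (mid lo hi) (El @ B) = R'" using EB(3) El_def by (auto simp: mid_def)
    have p4: "teq ((R' @ DY) @ A @ ([nu] @ Eh @ [mu]))
              ((R' @ DY) @ filter (\<lambda>z. \<not> mid lo hi z) A @ filter (\<lambda>z. \<not> \<not> mid lo hi z) A @ ([nu] @ Eh @ [mu]))"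
    proof (rule partition_seg, intro ballI impI)
      fix u v assume uv: "u \<in> set A" "v \<in> set A" "\<not> mid lo hi u" "\<not> \<not> mid lo hi v"
      have "u = lo \<or> u = hi" using nmid_cases[OF i2, of u] uv by auto
      moreover have "nu \<le> v \<and> v \<le> mu" using midc2 uv by auto
      ultimately show "wit v u ([nu] @ Eh @ [mu])" using mnu mmu unfolding wit_def
        by (auto simp: min_def max_def)
    qed
    define DA where "DA = filter (\<lambda>z. \<not> mid lo hi z) A"
    have fA: "filter (\<lambda>z. \<not> \<not> mid lo hi z) A = U1" using AB(2) by simp
    have Ehh: "\<forall>z\<in>set Eh. z = hi" using Elh Eh_def by auto
    have p5: "teq ((R' @ DY @ DA) @ (U1 @ [nu] @ Eh) @ [mu])
              ((R' @ DY @ DA) @ filter (\<lambda>z. \<not> mid lo hi z) (U1 @ [nu] @ Eh) @ filter (\<lambda>z. \<not> \<not> mid lo hi z) (U1 @ [nu] @ Eh) @ [mu])"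
    proof (rule partition_seg, intro ballI impI)
      fix u v assume uv: "u \<in> set (U1 @ [nu] @ Eh)" "v \<in> set (U1 @ [nu] @ Eh)" "\<not> mid lo hi u" "\<not> \<not> mid lo hi v"
      have "u = hi" using uv U1m mnu' Ehh by auto
      moreover have "v \<le> mu" using uv Ehh U1m bnd setc' mnu lh by (auto simp: mid_def)
      ultimately show "wit v u [mu]" using mmu unfolding wit_def by (auto simp: min_def max_def)
    qed
    have f5a: "filter (\<lambda>z. \<not> mid lo hi z) (U1 @ [nu] @ Eh) = Eh" using U1m mnu' Ehh lh by (auto simp: mid_def)
    have f5b: "filter (\<lambda>z. \<not> \<not> mid lo hi z) (U1 @ [nu] @ Eh) = U1 @ [nu]" using U1m mnu' Ehh lh by (auto simp: mid_def)
    define D where "D = DY @ DA @ Eh"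
    have Dset: "set D \<subseteq> {lo, hi}"
    proof
      fix z assume zD: "z \<in> set D"
      have "z \<in> set (A @ [nu] @ Eh @ [mu] @ El @ B) \<and> \<not> mid lo hi z"
        using zD unfolding D_def DY_def DA_def using Ehh lh by (auto simp: mid_def)
      then show "z \<in> {lo, hi}" using nmid_cases[OF i2] by blast
    qed
    have p6: "teq (R' @ D @ (U1 @ [nu, mu]))
         (R' @ replicate (count (mset D) hi) hi @ replicate (count (mset D) lo) lo @ (U1 @ [nu, mu]))"
      by (rule sortD[OF lh Dset, of nu]) (use mnu in auto)
    define i where "i = count (mset D) hi"
    define j where "j = count (mset D) lo"
    have tt: "teq (El @ B @ A @ [nu] @ Eh @ [mu]) (R' @ replicate i hi @ replicate j lo @ (U1 @ [nu, mu]))"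
    proof -
      have "teq (El @ B @ A @ [nu] @ Eh @ [mu]) (R' @ DY @ A @ [nu] @ Eh @ [mu])"
        using p3 unfolding fY DY_def[symmetric] by simp
      also have "teq \<dots> (R' @ DY @ DA @ U1 @ [nu] @ Eh @ [mu])"
        using p4 unfolding fA DA_def[symmetric] by simp
      also have "teq \<dots> (R' @ DY @ DA @ Eh @ U1 @ [nu] @ [mu])"
        using p5 unfolding f5a f5b by simp
      also have "teq \<dots> (R' @ replicate i hi @ replicate j lo @ (U1 @ [nu, mu]))"
        using p6 D_def i_def j_def by simp
      finally show ?thesis .
    qed
    have "mset x = mset x1" using teq_mset[OF x1(1)] .
    also have "\<dots> = mset (A @ [nu] @ Eh @ [mu] @ El @ B)" using teq_mset[OF t1] .
    also have "\<dots> = mset (El @ B @ A @ [nu] @ Eh @ [mu])" using adj_mset[OF a2] .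
    also have "\<dots> = mset (R' @ replicate i hi @ replicate j lo @ (U1 @ [nu, mu]))" using teq_mset[OF tt] .
    finally have "i = b \<and> j = a" using count_final[of x R' i hi j lo "U1 @ [nu, mu]"] lh H U1m R'm mnu mmu
      by (auto simp: mid_def)
    then have "teq (El @ B @ A @ [nu] @ Eh @ [mu]) h" using tt h_def by simp
    then show "adj x h" using teq_trans[OF x1(1) t1] a2 adj_teq1 adj_teq2 teq_sym by blast
  qed
qed

definition rv :: "nat \<Rightarrow> nat list \<Rightarrow> nat list" where "rv K w = map (\<lambda>z. K - z) w"

lemma rv_app[simp]: "rv K (x @ y) = rv K x @ rv K y" and rv_Cons[simp]: "rv K (a # x) = (K - a) # rv K x"
  and rv_Nil[simp]: "rv K [] = []"
  by (auto simp: rv_def)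

lemma wit_rv:
  assumes "wit x y q" "x \<le> K" "y \<le> K" "\<forall>b\<in>set q. b \<le> K"
  shows "wit (K - x) (K - y) (rv K q)"
proof (cases "x = y")
  case True then show ?thesis by (simp add: wit_def)
next
  case False
  then obtain b where b: "b \<in> set q" "min x y \<le> b" "b \<le> max x y" using assms(1) by (auto simp: wit_def)
  have mem: "K - b \<in> set (rv K q)" using b(1) by (auto simp: rv_def)
  have bK: "b \<le> K" using b(1) assms(4) by auto
  have "min (K - x) (K - y) \<le> K - b \<and> K - b \<le> max (K - x) (K - y)"
  proof (cases "x \<le> y")
    case True
    then have "min (K - x) (K - y) = K - y" "max (K - x) (K - y) = K - x" using assms(3) by auto
    then show ?thesis using b True bK assms(2,3) by (simp add: min_def max_def) arith
  next
    case False
    then have "min (K - x) (K - y) = K - x" "max (K - x) (K - y) = K - y" using assms(2) by auto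
    then show ?thesis using b False bK assms(2,3) by (simp add: min_def max_def) arith
  qed
  then show ?thesis using mem unfolding wit_def by blast
qed

lemma teq_rv:
  assumes "teq u v" "\<forall>z\<in>set u. z \<le> K"
  shows "teq (rv K u) (rv K v)"
proof -
  have "(\<lambda>x y. taig_step x y \<or> taig_step y x)\<^sup>*\<^sup>* u v" using assms(1) by (simp add: teq_alt)
  then show ?thesis
  proof (induction rule: rtranclp_induct)
    case base then show ?case by simp
  next
    case (step y z)
    have ty: "teq u y" using step.hyps(1) by (simp add: teq_alt)
    have sy: "\<forall>a\<in>set y. a \<le> K" using teq_set[OF ty] assms(2) by simp
    from step.hyps(2) obtain p x1 x2 q where sw: "(y = p @ [x1, x2] @ q \<and> z = p @ [x2, x1] @ q) \<or> (z = p @ [x1, x2] @ q \<and> y = p @ [x2, x1] @ q)" "wit x1 x2 q"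
      using step_swap by metis
    have bnd: "x1 \<le> K" "x2 \<le> K" "\<forall>b\<in>set q. b \<le> K" using sw(1) sy by auto
    have w: "wit (K - x1) (K - x2) (rv K q)" using wit_rv[OF sw(2) bnd] .
    have "teq (rv K p @ [K - x1, K - x2] @ rv K q) (rv K p @ [K - x2, K - x1] @ rv K q)" using swap[OF w] .
    then have "teq (rv K y) (rv K z)" using sw(1) teq_sym by auto
    then show ?case using step.IH teq_trans by blast
  qed
qed

lemma adj_rv:
  assumes "adj u v" "\<forall>z\<in>set u. z \<le> K"
  shows "adj (rv K u) (rv K v)"
proof -
  obtain x y where xy: "teq u (x @ y)" "teq v (y @ x)" using assms(1) unfolding adj_def by blast
  have sv: "\<forall>z\<in>set v. z \<le> K" using teq_set[OF xy(1)] teq_set[OF xy(2)] assms(2) by auto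
  have "teq (rv K u) (rv K x @ rv K y)" using teq_rv[OF xy(1) assms(2)] by simp
  moreover have "teq (rv K v) (rv K y @ rv K x)" using teq_rv[OF xy(2) sv] by simp
  ultimately show ?thesis unfolding adj_def by blast
qed

lemma mid_rv: "z \<le> lo + hi \<Longrightarrow> mid lo hi (lo + hi - z) = mid lo hi z"
  by (auto simp: mid_def)

lemma filter_rv: "\<forall>z\<in>set w. z \<le> lo + hi \<Longrightarrow> filter (mid lo hi) (rv (lo + hi) w) = rv (lo + hi) (filter (mid lo hi) w)"
  by (induction w) (auto simp: mid_rv)

lemma inr_rv: "inr lo hi w \<Longrightarrow> inr lo hi (rv (lo + hi) w)"
  by (auto simp: inr_def rv_def)

lemma inr_le: "inr lo hi w \<Longrightarrow> \<forall>z\<in>set w. z \<le> lo + hi"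
  by (auto simp: inr_def)

lemma count_rv: "\<forall>z\<in>set w. z \<le> K \<Longrightarrow> e \<le> K \<Longrightarrow> count (mset (rv K w)) (K - e) = count (mset w) e"
  by (induction w) auto

lemma rv_rv: "\<forall>z\<in>set w. z \<le> K \<Longrightarrow> rv K (rv K w) = w"
  by (induction w) auto

lemma hub_nu:
  assumes lh: "lo < hi" and cm: "\<forall>z\<in>set c. mid lo hi z" and cne: "c \<noteq> []" and lst: "last c = Min (set c)"
  shows "\<exists>h. \<forall>x. inr lo hi x \<and> teq (filter (mid lo hi) x) c \<and> count (mset x) lo = a \<and> count (mset x) hi = b \<longrightarrow> adj x h"
proof -
  define K where "K = lo + hi"
  define c' where "c' = rv K c"
  have cK: "\<forall>z\<in>set c. z \<le> K" using cm by (auto simp: mid_def K_def)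
  have cm': "\<forall>z\<in>set c'. mid lo hi z" using cm cK by (auto simp: c'_def rv_def K_def mid_def)
  have cne': "c' \<noteq> []" using cne by (simp add: c'_def rv_def)
  have fin: "finite (set c)" "set c \<noteq> {}" using cne by auto
  have lst': "last c' = Max (set c')"
  proof -
    have l: "last c' = K - Min (set c)" using cne lst by (simp add: c'_def rv_def last_map)
    have "Max (set c') = K - Min (set c)"
    proof (rule Max_eqI)
      show "finite (set c')" by simp
      show "K - Min (set c) \<in> set c'" using Min_in[OF fin] by (auto simp: c'_def rv_def)
      fix y assume "y \<in> set c'"
      then obtain z where "z \<in> set c" "y = K - z" by (auto simp: c'_def rv_def)
      then show "y \<le> K - Min (set c)" using fin by (simp add: diff_le_mono2)
    qed
    then show ?thesis using l by simp
  qed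
  obtain h' where h': "\<forall>x. inr lo hi x \<and> teq (filter (mid lo hi) x) c' \<and> count (mset x) lo = b \<and> count (mset x) hi = a \<longrightarrow> adj x h'"
    using hub_mu[OF lh cm' cne' lst', of b a] by blast
  show ?thesis
  proof (intro exI[of _ "rv K h'"] allI impI)
    fix x assume H: "inr lo hi x \<and> teq (filter (mid lo hi) x) c \<and> count (mset x) lo = a \<and> count (mset x) hi = b"
    have xK: "\<forall>z\<in>set x. z \<le> K" using inr_le H K_def by blast
    have i': "inr lo hi (rv K x)" using inr_rv H K_def by blast
    have fK: "\<forall>z\<in>set (filter (mid lo hi) x). z \<le> K" using xK by auto
    have "teq (filter (mid lo hi) (rv K x)) c'"
      using teq_rv[OF conjunct1[OF conjunct2[OF H]] fK] filter_rv[OF xK[unfolded K_def]] c'_def K_def by simp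
    moreover have "count (mset (rv K x)) lo = b" using count_rv[OF xK, of hi] H K_def by simp
    moreover have "count (mset (rv K x)) hi = a" using count_rv[OF xK, of lo] H K_def lh by simp
    ultimately have "adj (rv K x) h'" using h' i' by blast
    moreover have "\<forall>z\<in>set (rv K x). z \<le> K" by (auto simp: rv_def)
    ultimately have "adj (rv K (rv K x)) (rv K h')" using adj_rv by blast
    then show "adj x (rv K h')" using rv_rv[OF xK] by simp
  qed
qed

lemma hub:
  assumes lh: "lo < hi" and cm: "\<forall>z\<in>set c. mid lo hi z"
  shows "\<exists>h. \<forall>x. inr lo hi x \<and> teq (filter (mid lo hi) x) c \<and> count (mset x) lo = a \<and> count (mset x) hi = b \<longrightarrow> adj x h"
proof (cases "c = []")
  case True
  show ?thesis
  proof (intro exI[of _ "replicate a lo @ replicate b hi"] allI impI)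
    fix x assume H: "inr lo hi x \<and> teq (filter (mid lo hi) x) c \<and> count (mset x) lo = a \<and> count (mset x) hi = b"
    have "filter (mid lo hi) x = []" using teq_mset H True by fastforce
    then show "adj x (replicate a lo @ replicate b hi)" using hub_empty[OF lh] H by blast
  qed
next
  case False
  have fin: "finite (set c)" "set c \<noteq> {}" using False by auto
  have "last c \<in> set c" using False by simp
  then have "Min (set c) \<le> last c" "last c \<le> Max (set c)" using fin by auto
  then consider "last c = Max (set c)" | "last c = Min (set c)" | "Min (set c) < last c \<and> last c < Max (set c)"
    by linarith
  then show ?thesis
  proof cases
    case 1 then show ?thesis using hub_mu[OF lh cm False] by blast
  next
    case 2 then show ?thesis using hub_nu[OF lh cm False] by blast
  next
    case 3 then show ?thesis using hub_mid[OF lh cm False] by blast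
  qed
qed

lemma small_eq:
  assumes "card (set u) \<le> 1" "mset u = mset v"
  shows "u = v"
proof (cases "u = []")
  case True then show ?thesis using assms by simp
next
  case False
  then obtain a where "a \<in> set u" by (meson list.set_sel(1))
  then have su: "set u = {a}" using assms(1) by (metis card_1_singletonE card_0_eq empty_iff finite_set le_Suc_eq One_nat_def le_zero_eq singletonD)
  have sv: "set v = {a}" using su assms(2) by (metis set_mset_mset)
  have l: "length v = length u" using assms(2) by (metis size_mset)
  have "u = replicate (length u) a" using su by (intro replicate_eqI) auto
  moreover have "v = replicate (length u) a" using sv l by (intro replicate_eqI) auto
  ultimately show ?thesis by simp
qed

theorem main_word: "mset u = mset v \<Longrightarrow> (adj ^^ card (set u)) u v"
proof (induction "card (set u)" arbitrary: u v rule: less_induct)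
  case less
  show ?case
  proof (cases "card (set u) \<le> 1")
    case True
    then have "u = v" using small_eq less.prems by blast
    then show ?thesis using relpow_adj_refl by simp
  next
    case False
    then have ne: "set u \<noteq> {}" by auto
    define lo where "lo = Min (set u)"
    define hi where "hi = Max (set u)"
    have fin: "finite (set u)" by simp
    have loin: "lo \<in> set u" and hiin: "hi \<in> set u" using Min_in Max_in fin ne lo_def hi_def by auto
    have lh: "lo < hi"
    proof (rule ccontr)
      assume "\<not> lo < hi"
      then have "\<forall>z\<in>set u. z = lo" using fin lo_def hi_def by (metis Max_ge Min_le antisym not_less order_trans)
      then have "set u \<subseteq> {lo}" by auto
      then have "card (set u) \<le> 1" by (metis card.empty card_insert_disjoint card_mono empty_iff finite.intros(1) finite_insert le_Suc_eq One_nat_def)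
      then show False using False by simp
    qed
    have iu: "inr lo hi u" using fin lo_def hi_def by (auto simp: inr_def)
    define cu where "cu = filter (mid lo hi) u"
    define cv where "cv = filter (mid lo hi) v"
    have mc: "mset cu = mset cv" using less.prems cu_def cv_def by (metis mset_filter)
    have scu: "set cu = set u - {lo, hi}" using iu by (auto simp: cu_def mid_def inr_def)
    have ccu: "card (set cu) = card (set u) - 2" using scu loin hiin lh by (simp add: card_Diff_subset)
    have "card (set cu) < card (set u)" using ccu False by simp
    then have p: "(adj ^^ card (set cu)) cu cv" using less.hyps mc by blast
    obtain u' where u': "(adj ^^ card (set cu)) u u'" "inr lo hi u'" "teq (filter (mid lo hi) u') cv"
      using lift_path[OF p iu] cu_def by auto
    have cvm: "\<forall>z\<in>set cv. mid lo hi z" using cv_def by auto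
    obtain h where h: "\<forall>x. inr lo hi x \<and> teq (filter (mid lo hi) x) cv \<and> count (mset x) lo = count (mset u) lo \<and> count (mset x) hi = count (mset u) hi \<longrightarrow> adj x h"
      using hub[OF lh cvm] by blast
    have mu': "mset u' = mset u" using relpow_adj_mset[OF u'(1)] by simp
    have "adj u' h" using h u' mu' by simp
    moreover have "adj v h"
    proof -
      have "set v = set u" using less.prems by (metis set_mset_mset)
      then have "inr lo hi v" using iu by (simp add: inr_def)
      then show ?thesis using h less.prems cv_def by simp
    qed
    ultimately have "(adj ^^ Suc (Suc (card (set cu)))) u v"
      using relpowp_Suc_I[OF relpowp_Suc_I[OF u'(1)]] adj_sym by blast
    moreover have "Suc (Suc (card (set cu))) = card (set u)" using ccu False by simp
    ultimately show ?thesis by simp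
  qed
qed

primrec pos :: "nat \<Rightarrow> nat list \<Rightarrow> nat" where
  "pos z [] = 0"
| "pos z (a # w) = (if a = z then 0 else Suc (pos z w))"

lemma pos_append: "pos z (u @ v) = (if z \<in> set u then pos z u else length u + pos z v)"
  by (induction u) auto

lemma pos_lt: "z \<in> set u \<Longrightarrow> pos z u < length u"
  by (induction u) auto

definition tm :: "nat list \<Rightarrow> nat \<Rightarrow> int" where
  "tm w i = (if pos (i + 2) w < pos (i + 1) w then 1 else 0)"

definition rc :: "nat \<Rightarrow> nat list \<Rightarrow> int" where
  "rc n w = (\<Sum>i<n - 1. tm w i)"

lemma pos_swap_other:
  assumes "distinct (p @ [x1, x2] @ q)" "z \<noteq> x1" "z \<noteq> x2"
  shows "pos z (p @ [x1, x2] @ q) = pos z (p @ [x2, x1] @ q) \<and>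
         pos z (p @ [x1, x2] @ q) \<noteq> length p \<and> pos z (p @ [x1, x2] @ q) \<noteq> Suc (length p)"
  using assms pos_lt[of z p] by (auto simp: pos_append)

lemma pos_swap_x:
  assumes "distinct (p @ [x1, x2] @ q)"
  shows "pos x1 (p @ [x1, x2] @ q) = length p" "pos x2 (p @ [x1, x2] @ q) = Suc (length p)"
    "pos x1 (p @ [x2, x1] @ q) = Suc (length p)" "pos x2 (p @ [x2, x1] @ q) = length p"
  using assms by (auto simp: pos_append)

lemma tmswap:
  assumes d: "distinct (p @ [x1, x2] @ q)" and na: "x2 \<noteq> Suc x1" "x1 \<noteq> Suc x2"
  shows "tm (p @ [x1, x2] @ q) i = tm (p @ [x2, x1] @ q) i"
proof -
  define w where "w = p @ [x1, x2] @ q"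
  define w' where "w' = p @ [x2, x1] @ q"
  define P where "P = length p"
  have o: "\<And>z. z \<noteq> x1 \<Longrightarrow> z \<noteq> x2 \<Longrightarrow> pos z w = pos z w' \<and> pos z w \<noteq> P \<and> pos z w \<noteq> Suc P"
    using pos_swap_other[OF d] w_def w'_def P_def by blast
  have x: "pos x1 w = P" "pos x2 w = Suc P" "pos x1 w' = Suc P" "pos x2 w' = P"
    using pos_swap_x[OF d] w_def w'_def P_def by auto
  have H1: "\<And>Z. Z \<noteq> P \<Longrightarrow> Z \<noteq> Suc P \<Longrightarrow> (Z < P) = (Z < Suc P) \<and> (P < Z) = (Suc P < Z)" by auto
  have "(pos (i + 2) w < pos (i + 1) w) = (pos (i + 2) w' < pos (i + 1) w')"
  proof (cases "i + 2 = x1 \<or> i + 2 = x2")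
    case True
    then have n1: "i + 1 \<noteq> x1" "i + 1 \<noteq> x2" using na by auto
    obtain Z where Z: "pos (i + 1) w = Z" "pos (i + 1) w' = Z" "Z \<noteq> P" "Z \<noteq> Suc P" using o[OF n1] by metis
    show ?thesis using True
    proof
      assume a: "i + 2 = x1"
      show ?thesis unfolding Z(1,2) a x using H1[OF Z(3,4)] by simp
    next
      assume a: "i + 2 = x2"
      show ?thesis unfolding Z(1,2) a x using H1[OF Z(3,4)] by simp
    qed
  next
    case False
    then have n2: "i + 2 \<noteq> x1" "i + 2 \<noteq> x2" by auto
    obtain Z where Z: "pos (i + 2) w = Z" "pos (i + 2) w' = Z" "Z \<noteq> P" "Z \<noteq> Suc P" using o[OF n2] by metis
    show ?thesis
    proof (cases "i + 1 = x1 \<or> i + 1 = x2")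
      case True
      then show ?thesis
      proof
        assume a: "i + 1 = x1"
        show ?thesis unfolding Z(1,2) a x using H1[OF Z(3,4)] by simp
      next
        assume a: "i + 1 = x2"
        show ?thesis unfolding Z(1,2) a x using H1[OF Z(3,4)] by simp
      qed
    next
      case False
      then have n1: "i + 1 \<noteq> x1" "i + 1 \<noteq> x2" by auto
      show ?thesis using o[OF n1] Z by simp
    qed
  qed
  then show ?thesis unfolding tm_def w_def w'_def by simp
qed

lemma teq_term:
  assumes "teq u v" "distinct u"
  shows "tm u i = tm v i"
proof -
  have "(\<lambda>x y. taig_step x y \<or> taig_step y x)\<^sup>*\<^sup>* u v" using assms(1) by (simp add: teq_alt)
  then show ?thesis
  proof (induction rule: rtranclp_induct)
    case base then show ?case by simp
  next
    case (step y z)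
    have ty: "teq u y" using step.hyps(1) by (simp add: teq_alt)
    have dy: "distinct y" using assms(2) teq_mset[OF ty] mset_eq_imp_distinct_iff by blast
    from step.hyps(2) obtain p x1 x2 q where sw: "(y = p @ [x1, x2] @ q \<and> z = p @ [x2, x1] @ q) \<or> (z = p @ [x1, x2] @ q \<and> y = p @ [x2, x1] @ q)" "wit x1 x2 q"
      using step_swap by metis
    have d12: "distinct (p @ [x1, x2] @ q)" using sw(1) dy by auto
    then have ne: "x1 \<noteq> x2" "x1 \<notin> set q" "x2 \<notin> set q" by auto
    then obtain b where b: "b \<in> set q" "min x1 x2 \<le> b" "b \<le> max x1 x2" using sw(2) by (auto simp: wit_def)
    have "b \<noteq> x1" "b \<noteq> x2" using b ne by auto
    then have "x2 \<noteq> Suc x1" "x1 \<noteq> Suc x2" using b by (auto simp: min_def max_def split: if_splits)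
    then have "tm (p @ [x1, x2] @ q) i = tm (p @ [x2, x1] @ q) i" using tmswap[OF d12] by blast
    then have "tm y i = tm z i" using sw(1) by auto
    then show ?case using step.IH by simp
  qed
qed

lemma teq_rc: "teq u v \<Longrightarrow> distinct u \<Longrightarrow> rc n u = rc n v"
  unfolding rc_def using teq_term by (intro sum.cong) auto

definition chi :: "nat list \<Rightarrow> nat \<Rightarrow> int" where "chi x i = (if i + 1 \<in> set x then 1 else 0)"

lemma tmrot:
  assumes d: "distinct (x @ y)" and s: "i + 1 \<in> set (x @ y)" "i + 2 \<in> set (x @ y)"
  shows "tm (y @ x) i - tm (x @ y) i = chi x i - chi x (Suc i)"
proof -
  have dj: "set x \<inter> set y = {}" using d by auto
  consider "i + 1 \<in> set x" "i + 2 \<in> set x" | "i + 1 \<in> set y" "i + 2 \<in> set y"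
    | "i + 1 \<in> set x" "i + 2 \<in> set y" | "i + 1 \<in> set y" "i + 2 \<in> set x" using s by auto
  then show ?thesis
  proof cases
    case 1 then show ?thesis using dj by (auto simp: tm_def chi_def pos_append)
  next
    case 2 then show ?thesis using dj by (auto simp: tm_def chi_def pos_append)
  next
    case 3
    have "pos (i + 1) x < length x" "pos (i + 2) y < length y" using 3 pos_lt by auto
    then show ?thesis using 3 dj by (auto simp: tm_def chi_def pos_append)
  next
    case 4
    have "pos (i + 1) y < length y" "pos (i + 2) x < length x" using 4 pos_lt by auto
    then show ?thesis using 4 dj by (auto simp: tm_def chi_def pos_append)
  qed
qed

lemma rc_rot:
  assumes d: "distinct (x @ y)" and s: "set (x @ y) = {1..n}"
  shows "\<bar>rc n (y @ x) - rc n (x @ y)\<bar> \<le> 1"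
proof -
  have "rc n (y @ x) - rc n (x @ y) = (\<Sum>i<n - 1. tm (y @ x) i - tm (x @ y) i)"
    unfolding rc_def by (simp add: sum_subtractf)
  also have "\<dots> = (\<Sum>i<n - 1. chi x i - chi x (Suc i))"
  proof (rule sum.cong)
    fix i assume "i \<in> {..<n - 1}"
    then have "i + 1 \<in> set (x @ y)" "i + 2 \<in> set (x @ y)" using s by auto
    then show "tm (y @ x) i - tm (x @ y) i = chi x i - chi x (Suc i)" using tmrot[OF d] by blast
  qed simp
  also have "\<dots> = chi x 0 - chi x (n - 1)" by (rule sum_lessThan_telescope')
  finally show ?thesis by (simp add: chi_def)
qed

lemma path_rc:
  assumes "(adj ^^ k) u v" "distinct u" "set u = {1..n}"
  shows "\<bar>rc n u - rc n v\<bar> \<le> int k"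
  using assms(1)
proof (induction k arbitrary: v)
  case 0 then show ?case by simp
next
  case (Suc k)
  then obtain w where w: "(adj ^^ k) u w" "adj w v" by (auto elim: relpowp_Suc_E)
  have mw: "mset u = mset w" using relpow_adj_mset[OF w(1)] .
  have dw: "distinct w" using assms(2) mw mset_eq_imp_distinct_iff by blast
  have sw: "set w = {1..n}" using assms(3) mw by (metis set_mset_mset)
  obtain x y where xy: "teq w (x @ y)" "teq v (y @ x)" using w(2) unfolding adj_def by blast
  have dxy: "distinct (x @ y)" using dw teq_mset[OF xy(1)] mset_eq_imp_distinct_iff by blast
  have sxy: "set (x @ y) = {1..n}" using sw teq_set[OF xy(1)] by simp
  have dyx: "distinct (y @ x)" using dxy by auto
  have "rc n w = rc n (x @ y)" using teq_rc[OF xy(1) dw] .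
  moreover have "rc n v = rc n (y @ x)" using teq_rc[OF teq_sym[OF xy(2)] dyx] by simp
  moreover have "\<bar>rc n (y @ x) - rc n (x @ y)\<bar> \<le> 1" using rc_rot[OF dxy sxy] .
  ultimately show ?case using Suc.IH[OF w(1)] by simp
qed

lemma pos_upt: "a \<le> z \<Longrightarrow> z < b \<Longrightarrow> pos z [a..<b] = z - a"
proof (induction b)
  case 0 then show ?case by simp
next
  case (Suc b)
  show ?case
  proof (cases "z < b")
    case True then show ?thesis using Suc by (simp add: pos_append)
  next
    case False
    then have "z = b" using Suc by simp
    then show ?thesis using Suc by (simp add: pos_append)
  qed
qed

lemma pos_rev_upt: "a \<le> z \<Longrightarrow> z < b \<Longrightarrow> pos z (rev [a..<b]) = b - Suc z"
proof (induction b)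
  case 0 then show ?case by simp
next
  case (Suc b)
  show ?case
  proof (cases "z < b")
    case True then show ?thesis using Suc by simp
  next
    case False
    then have "z = b" using Suc by simp
    then show ?thesis using Suc by simp
  qed
qed

lemma rc_id: "rc n [1..<Suc n] = 0"
proof -
  have "\<forall>i\<in>{..<n - 1}. tm [1..<Suc n] i = 0"
  proof
    fix i assume i: "i \<in> {..<n - 1}"
    have "pos (i + 2) [1..<Suc n] = i + 1" using i by (intro trans[OF pos_upt]) auto
    moreover have "pos (i + 1) [1..<Suc n] = i" using i by (intro trans[OF pos_upt]) auto
    ultimately show "tm [1..<Suc n] i = 0" unfolding tm_def by simp
  qed
  then show ?thesis unfolding rc_def by simp
qed

lemma rc_rev: "rc n (rev [1..<Suc n]) = int (n - 1)"
proof -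
  have "\<forall>i\<in>{..<n - 1}. tm (rev [1..<Suc n]) i = 1"
  proof
    fix i assume i: "i \<in> {..<n - 1}"
    have "pos (i + 2) (rev [1..<Suc n]) = Suc n - Suc (i + 2)" using i by (intro pos_rev_upt) auto
    moreover have "pos (i + 1) (rev [1..<Suc n]) = Suc n - Suc (i + 1)" using i by (intro pos_rev_upt) auto
    ultimately show "tm (rev [1..<Suc n]) i = 1" unfolding tm_def using i by simp
  qed
  then have "rc n (rev [1..<Suc n]) = (\<Sum>i<n - 1. (1::int))" unfolding rc_def by (intro sum.cong) auto
  then show ?thesis by simp
qed

lemma lower_word:
  assumes "(adj ^^ k) [1..<Suc n] (rev [1..<Suc n])"
  shows "n - 1 \<le> k"
proof -
  have s: "set [1..<Suc n] = {1..n}" by (simp only: set_upt) auto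
  have d: "distinct [1..<Suc n]" by (rule distinct_upt)
  have "\<bar>rc n [1..<Suc n] - rc n (rev [1..<Suc n])\<bar> \<le> int k"
    by (rule path_rc[OF assms d s])
  then show ?thesis unfolding rc_id rc_rev by simp
qed

lemma taig_eq_teq: "taig_eq A u v \<Longrightarrow> teq u v"
proof -
  assume "taig_eq A u v"
  then have "(\<lambda>x y. x \<in> lists A \<and> y \<in> lists A \<and> (taig_step x y \<or> taig_step y x))\<^sup>*\<^sup>* u v"
    by (simp add: taig_eq_def)
  then show ?thesis unfolding teq_alt
    by (rule rtranclp_mono[THEN predicate2D, rotated]) auto
qed

lemma teq_taig_eq: "u \<in> lists A \<Longrightarrow> teq u v \<Longrightarrow> taig_eq A u v"
proof -
  assume u: "u \<in> lists A" and t: "teq u v"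
  have "(\<lambda>x y. taig_step x y \<or> taig_step y x)\<^sup>*\<^sup>* u v" using t by (simp add: teq_alt)
  then show ?thesis
  proof (induction rule: rtranclp_induct)
    case base then show ?case by (simp add: taig_eq_def)
  next
    case (step y z)
    have "teq u y" using step.hyps(1) by (simp add: teq_alt)
    then have y: "y \<in> lists A" using u teq_set by auto
    have "teq y z" using step.hyps(2) teq_step teq_sym by blast
    then have z: "z \<in> lists A" using y teq_set by auto
    have "(\<lambda>x y. x \<in> lists A \<and> y \<in> lists A \<and> (taig_step x y \<or> taig_step y x)) y z" using y z step.hyps(2) by blast
    then show ?case using step.IH unfolding taig_eq_def by (rule rtranclp.rtrancl_into_rtrancl[rotated])
  qed
qed

lemma lists_teq: "u \<in> lists A \<Longrightarrow> teq u v \<Longrightarrow> v \<in> lists A"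
  using teq_set by auto

lemma cls_teq: "u \<in> lists A \<Longrightarrow> cls A u = {v. teq u v}"
proof (intro set_eqI iffI)
  fix v assume u: "u \<in> lists A" and "v \<in> cls A u"
  then show "v \<in> {v. teq u v}" unfolding cls_def using taig_eq_teq by blast
next
  fix v assume u: "u \<in> lists A" and "v \<in> {v. teq u v}"
  then have "teq u v" by simp
  then show "v \<in> cls A u" unfolding cls_def using lists_teq[OF u] teq_taig_eq[OF u] by blast
qed

lemma cls_eq_iff: "u \<in> lists A \<Longrightarrow> v \<in> lists A \<Longrightarrow> cls A u = cls A v \<longleftrightarrow> teq u v"
proof
  assume u: "u \<in> lists A" and v: "v \<in> lists A" and e: "cls A u = cls A v"
  have "v \<in> cls A v" using cls_teq[OF v] by simp
  then have "v \<in> cls A u" using e by simp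
  then show "teq u v" using cls_teq[OF u] by simp
next
  assume u: "u \<in> lists A" and v: "v \<in> lists A" and t: "teq u v"
  show "cls A u = cls A v" unfolding cls_teq[OF u] cls_teq[OF v]
    using t teq_sym teq_trans by blast
qed

lemma edge_iff:
  assumes u: "u \<in> lists A" and v: "v \<in> lists A"
  shows "K_edge A (cls A u) (cls A v) \<longleftrightarrow> adj u v"
proof
  assume "K_edge A (cls A u) (cls A v)"
  then obtain x y where xy: "x \<in> lists A" "y \<in> lists A" "cls A u = cls A (x @ y)" "cls A v = cls A (y @ x)"
    unfolding K_edge_def by blast
  have xyA: "x @ y \<in> lists A" and yxA: "y @ x \<in> lists A" using xy by auto
  have "teq u (x @ y)" using cls_eq_iff[OF u xyA] xy(3) by simp
  moreover have "teq v (y @ x)" using cls_eq_iff[OF v yxA] xy(4) by simp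
  ultimately show "adj u v" unfolding adj_def by blast
next
  assume "adj u v"
  then obtain x y where xy: "teq u (x @ y)" "teq v (y @ x)" unfolding adj_def by blast
  have "x @ y \<in> lists A" using lists_teq[OF u xy(1)] .
  then have xA: "x \<in> lists A" and yA: "y \<in> lists A" by auto
  have "cls A u = cls A (x @ y)" using cls_eq_iff[OF u] xA yA xy(1) by simp
  moreover have "cls A v = cls A (y @ x)" using cls_eq_iff[OF v] xA yA xy(2) by simp
  ultimately show "K_edge A (cls A u) (cls A v)" unfolding K_edge_def using xA yA by blast
qed

lemma pow_from:
  assumes "(K_edge A ^^ k) (cls A u) t" "u \<in> lists A"
  shows "\<exists>v\<in>lists A. t = cls A v \<and> (adj ^^ k) u v"
  using assms(1)
proof (induction k arbitrary: t)
  case 0 then show ?case using assms(2) by auto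
next
  case (Suc k)
  then obtain s where s: "(K_edge A ^^ k) (cls A u) s" "K_edge A s t" by (auto elim: relpowp_Suc_E)
  obtain w where w: "w \<in> lists A" "s = cls A w" "(adj ^^ k) u w" using Suc.IH[OF s(1)] by blast
  obtain x y where xy: "x \<in> lists A" "y \<in> lists A" "s = cls A (x @ y)" "t = cls A (y @ x)"
    using s(2) unfolding K_edge_def by blast
  have yx: "y @ x \<in> lists A" using xy by auto
  have "K_edge A (cls A w) (cls A (y @ x))" using s(2) w(2) xy(4) by simp
  then have "adj w (y @ x)" using edge_iff[OF w(1) yx] by simp
  then have "(adj ^^ Suc k) u (y @ x)" using relpowp_Suc_I[OF w(3)] by blast
  then show ?case using xy(4) yx by blast
qed

lemma pow_to:
  assumes "(adj ^^ k) u v" "u \<in> lists A"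
  shows "(K_edge A ^^ k) (cls A u) (cls A v)"
  using assms(1)
proof (induction k arbitrary: v)
  case 0 then show ?case by simp
next
  case (Suc k)
  then obtain w where w: "(adj ^^ k) u w" "adj w v" by (auto elim: relpowp_Suc_E)
  have mw: "mset u = mset w" "mset w = mset v" using relpow_adj_mset[OF w(1)] adj_mset[OF w(2)] by auto
  have wA: "w \<in> lists A" using assms(2) mset_eq_setD[OF mw(1)] by auto
  have vA: "v \<in> lists A" using wA mset_eq_setD[OF mw(2)] by auto
  have "K_edge A (cls A w) (cls A v)" using edge_iff[OF wA vA] w(2) by simp
  then show ?case using Suc.IH[OF w(1)] by (auto intro: relpowp_Suc_I)
qed

lemma conn_from:
  assumes "K_conn A (cls A u) t" "u \<in> lists A"
  shows "\<exists>v\<in>lists A. t = cls A v \<and> mset u = mset v"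
proof -
  obtain k where "(K_edge A ^^ k) (cls A u) t"
    using rtranclp_imp_relpowp[OF assms(1)[unfolded K_conn_def]] by blast
  then show ?thesis using pow_from[OF _ assms(2)] relpow_adj_mset by blast
qed

lemma conn_to:
  assumes "u \<in> lists A" "mset u = mset v"
  shows "K_conn A (cls A u) (cls A v)"
proof -
  have "(K_edge A ^^ card (set u)) (cls A u) (cls A v)" using pow_to[OF main_word[OF assms(2)] assms(1)] .
  then show ?thesis unfolding K_conn_def by (rule relpowp_imp_rtranclp)
qed

lemma dist_le:
  assumes "(adj ^^ k) u v" "u \<in> lists A"
  shows "K_dist A (cls A u) (cls A v) \<le> enat k"
proof -
  have p: "(K_edge A ^^ k) (cls A u) (cls A v)" using pow_to[OF assms] .
  then have "(LEAST k. (K_edge A ^^ k) (cls A u) (cls A v)) \<le> k" by (rule Least_le)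
  then show ?thesis unfolding K_dist_def using p by auto
qed

lemma card_le_n: "v \<in> lists (Alph_n n) \<Longrightarrow> card (set v) \<le> n"
proof -
  assume "v \<in> lists (Alph_n n)"
  then have "set v \<subseteq> {1..n}" by (auto simp: Alph_n_def)
  then have "card (set v) \<le> card {1..n}" by (rule card_mono[rotated]) simp
  then show ?thesis by simp
qed

lemma diam_le:
  assumes "s \<in> K_vert (Alph_n n)"
  shows "comp_diam (Alph_n n) s \<le> enat n"
proof -
  obtain w where w: "w \<in> lists (Alph_n n)" "s = cls (Alph_n n) w" using assms unfolding K_vert_def by blast
  show ?thesis unfolding comp_diam_def
  proof (rule SUP_least)
    fix p assume "p \<in> {(t, u). K_conn (Alph_n n) s t \<and> K_conn (Alph_n n) s u}"
    then obtain t u where p: "p = (t, u)" "K_conn (Alph_n n) s t" "K_conn (Alph_n n) s u" by blast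
    obtain v1 where v1: "v1 \<in> lists (Alph_n n)" "t = cls (Alph_n n) v1" "mset w = mset v1"
      using conn_from[OF p(2)[unfolded w(2)] w(1)] by blast
    obtain v2 where v2: "v2 \<in> lists (Alph_n n)" "u = cls (Alph_n n) v2" "mset w = mset v2"
      using conn_from[OF p(3)[unfolded w(2)] w(1)] by blast
    have "mset v1 = mset v2" using v1(3) v2(3) by simp
    then have "(adj ^^ card (set v1)) v1 v2" by (rule main_word)
    then have "K_dist (Alph_n n) t u \<le> enat (card (set v1))" using dist_le v1(1,2) v2(2) by blast
    also have "\<dots> \<le> enat n" using card_le_n[OF v1(1)] by simp
    finally show "K_dist (Alph_n n) (fst p) (snd p) \<le> enat n" using p(1) by simp
  qed
qed

lemma id_in: "[1..<Suc n] \<in> lists (Alph_n n)"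
  by (auto simp: Alph_n_def)

lemma dist_ge:
  "enat (n - 1) \<le> K_dist (Alph_n n) (cls (Alph_n n) [1..<Suc n]) (cls (Alph_n n) (rev [1..<Suc n]))"
proof -
  define A where "A = Alph_n n"
  define s where "s = cls A [1..<Suc n]"
  define t where "t = cls A (rev [1..<Suc n])"
  have idA: "[1..<Suc n] \<in> lists A" using id_in A_def by simp
  have rA: "rev [1..<Suc n] \<in> lists A" using idA by auto
  show ?thesis
  proof (cases "\<exists>k. (K_edge A ^^ k) s t")
    case False then show ?thesis unfolding K_dist_def A_def[symmetric] s_def[symmetric] t_def[symmetric] by simp
  next
    case True
    define L where "L = (LEAST k. (K_edge A ^^ k) s t)"
    have "(K_edge A ^^ L) s t" using LeastI_ex[OF True] L_def by simp
    then obtain v where v: "v \<in> lists A" "t = cls A v" "(adj ^^ L) [1..<Suc n] v"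
      using pow_from[OF _ idA] s_def by blast
    have tv: "teq v (rev [1..<Suc n])" using cls_eq_iff[OF v(1) rA] v(2) t_def by simp
    have d: "distinct [1..<Suc n]" by simp
    have s': "set [1..<Suc n] = {1..n}" by (simp only: set_upt) auto
    have "\<bar>rc n [1..<Suc n] - rc n v\<bar> \<le> int L" by (rule path_rc[OF v(3) d s'])
    moreover have "distinct v" using d relpow_adj_mset[OF v(3)] mset_eq_imp_distinct_iff by blast
    ultimately have "\<bar>rc n [1..<Suc n] - rc n (rev [1..<Suc n])\<bar> \<le> int L"
      using teq_rc[OF tv] by simp
    then have "n - 1 \<le> L" unfolding rc_id rc_rev by simp
    then show ?thesis unfolding K_dist_def A_def[symmetric] s_def[symmetric] t_def[symmetric] L_def[symmetric]
      using True by simp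
  qed
qed

lemma enat_between: "x \<le> enat n \<Longrightarrow> enat (n - 1) \<le> x \<Longrightarrow> x \<in> {enat (n - 1), enat n}"
proof -
  assume a: "x \<le> enat n" "enat (n - 1) \<le> x"
  then obtain m where m: "x = enat m" by (cases x) auto
  then have "m \<le> n" "n - 1 \<le> m" using a by auto
  then have "m = n - 1 \<or> m = n" by arith
  then show ?thesis using m by auto
qed

theorem mainTheorem5:
  shows "(\<forall>u \<in> lists Alph. \<forall>v \<in> lists Alph.
            K_conn Alph (cls Alph u) (cls Alph v) \<longleftrightarrow> mset u = mset v)
       \<and> (\<forall>n::nat. n \<ge> 1 \<longrightarrow>
            (\<forall>s \<in> K_vert (Alph_n n). comp_diam (Alph_n n) s \<le> enat n)
          \<and> (\<exists>s \<in> K_vert (Alph_n n). comp_diam (Alph_n n) s \<ge> enat (n - 1))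
          \<and> (SUP s \<in> K_vert (Alph_n n). comp_diam (Alph_n n) s) \<in> {enat (n - 1), enat n})"
proof (intro conjI ballI allI impI)
  fix u v assume u: "u \<in> lists Alph" and v: "v \<in> lists Alph"
  show "K_conn Alph (cls Alph u) (cls Alph v) \<longleftrightarrow> mset u = mset v"
  proof
    assume "K_conn Alph (cls Alph u) (cls Alph v)"
    then obtain v' where v': "v' \<in> lists Alph" "cls Alph v = cls Alph v'" "mset u = mset v'"
      using conn_from[OF _ u] by blast
    have "teq v v'" using cls_eq_iff[OF v v'(1)] v'(2) by simp
    then show "mset u = mset v" using v'(3) teq_mset by simp
  next
    assume "mset u = mset v"
    then show "K_conn Alph (cls Alph u) (cls Alph v)" using conn_to[OF u] by blast
  qed
next
  fix n :: nat and s assume "1 \<le> n" "s \<in> K_vert (Alph_n n)"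
  then show "comp_diam (Alph_n n) s \<le> enat n" using diam_le by blast
next
  fix n :: nat assume n: "1 \<le> n"
  define A where "A = Alph_n n"
  define s0 where "s0 = cls A [1..<Suc n]"
  define t0 where "t0 = cls A (rev [1..<Suc n])"
  have idA: "[1..<Suc n] \<in> lists A" using id_in A_def by simp
  have s0v: "s0 \<in> K_vert A" unfolding K_vert_def s0_def using idA by blast
  have c1: "K_conn A s0 s0" by (simp add: K_conn_def)
  have c2: "K_conn A s0 t0" unfolding s0_def t0_def by (rule conn_to[OF idA]) simp
  have "K_dist A s0 t0 \<le> comp_diam A s0" unfolding comp_diam_def
    by (rule SUP_upper2[of "(s0, t0)"]) (use c1 c2 in auto)
  then have ge: "enat (n - 1) \<le> comp_diam A s0"
    using order_trans[OF dist_ge[of n, folded A_def, folded s0_def t0_def]] by blast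
  then show "\<exists>s \<in> K_vert (Alph_n n). comp_diam (Alph_n n) s \<ge> enat (n - 1)" using s0v A_def by blast
  have up: "(SUP s \<in> K_vert A. comp_diam A s) \<le> enat n" using diam_le A_def by (intro SUP_least) blast
  have lo: "enat (n - 1) \<le> (SUP s \<in> K_vert A. comp_diam A s)" using ge s0v by (meson SUP_upper2)
  show "(SUP s \<in> K_vert (Alph_n n). comp_diam (Alph_n n) s) \<in> {enat (n - 1), enat n}"
    using enat_between[OF up lo] A_def by simp
qed


end
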